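(* Let $\sigma\in(0,1)$. In the setting described in the context, there are $B_h>0$, $h\le H+G$, such that for all sufficiently large $T$ and every $h\le H+G$, \[ (-1)^{\mathrm{j}(h)}\sum_p\frac{\mathrm{Re}\left(\overline{r(p)}a_{L_h}(p)\right)}{(1+|r(p)|^2)p^\sigma}\le-B_h\frac{(\log T)^{1-\sigma}}{\log\log T}, \] where $\mathrm{j}(h)=1$ if $h\le H$ and $\mathrm{j}(h)=0$ if $H<h\le H+G$. For $\sigma=1$ the same holds with the right-hand side replaced by $-B_h\log\log\log T$.
   Context: $\mathcal{S}_{\text{poly}}$: Dirichlet series $L(s)=\sum a_L(n)n^{-s}$, $a_L(1)=1$, absolutely convergent for $\mathrm{Re}\,s>1$, with $(s-1)^mL(s)$ entire of finite order, functional equation $L(s)\gamma(s)=\omega\overline{\gamma(1-\bar s)L(1-\bar s)}$, $\gamma(s)=Q^s\prod_k\Gamma(\lambda_ks+\mu_k)$, and Euler product $\prod_p\prod_{j\le\partial_L}(1-a_{L,j}(p)p^{-s})^{-1}$ with $a_{L,j}(p)\ll p^{\theta_L}$, $\theta_L<1/4$; Ramanujan Hypothesis: $a_L(n)\ll_\epsilon n^\epsilon$. Setting: integers $H,G\ge0$; $L_1,\dots,L_{H+G}\in\mathcal{S}_{\text{poly}}$ satisfying the Ramanujan Hypothesis with $\frac{\log x}{x}\sum_{p\le x}a_{L_h}(p)\overline{a_{L_g}(p)}\to\kappa(h,g)$, $\kappa(h,h)>0$, $\kappa(h,g)=0$ for $h\ne g$. Fix $\alpha\in(0,1)$, $0<\beta<\alpha/2$,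 a sufficiently small $\epsilon>0$, a sufficiently large constant $C$, and $x_\epsilon$ large enough that for $x\ge x_\epsilon$ and all $h$: $|\sum_{p\le x}|a_{L_h}(p)|^2-\kappa(h,h)\frac{x}{\log x}|\le\frac{\epsilon x}{\log x}$ and $|\sum_{g\ne h}\sum_{p\le x}a_{L_h}(p)a_{L_g}(p)|\le\frac{\epsilon x}{\log x}$. $r(p)$ is defined for primes by $Cr(p)=\sum_{h\le H}a_{L_h}(p)-\sum_{H<h\le H+G}a_{L_h}(p)$ if $x_\epsilon\le p\le\beta\log T$ and $r(p)=0$ otherwise. *)

theory Defs
  imports "HOL-Analysis.Analysis"
begin

definition dser :: "(nat \<Rightarrow> complex) \<Rightarrow> complex \<Rightarrow> complex" where
  "dser a s = (\<Sum>n. a (Suc n) / of_nat (Suc n) powr s)"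

definition gamma_factor :: "real \<Rightarrow> nat \<Rightarrow> (nat \<Rightarrow> real) \<Rightarrow> (nat \<Rightarrow> complex) \<Rightarrow> complex \<Rightarrow> complex" where
  "gamma_factor Q K lam mu s = of_real Q powr s * (\<Prod>k<K. Gamma (of_real (lam k) * s + mu k))"

text \<open>The class S_poly, as a predicate on the coefficient sequence a_L (a L = a_L(n), n >= 1).
  L(s) is the meromorphic function F(s)/(s-1)^m, where F is the entire function (s-1)^m L(s).
  The functional equation is required on the (open dense) set where all Gamma factors
  on both sides are finite and s is not 0 or 1.\<close>
definition S_poly :: "(nat \<Rightarrow> complex) \<Rightarrow> bool" where
  "S_poly a \<longleftrightarrow>
     a 1 = 1 \<and>
     (\<forall>s. 1 < Re s \<longrightarrow> summable (\<lambda>n. norm (a (Suc n) / of_nat (Suc n) powr s))) \<and>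
     (\<exists>(m::nat) F. F holomorphic_on UNIV \<and>
        (\<forall>s. 1 < Re s \<longrightarrow> F s = (s - 1) ^ m * dser a s) \<and>
        (\<exists>A B. \<forall>s. norm (F s) \<le> B * exp (norm s powr A)) \<and>
        (\<exists>Q K lam mu \<omega>. Q > 0 \<and> (\<forall>k<K. lam k > 0 \<and> Re (mu k) \<ge> 0) \<and> norm \<omega> = 1 \<and>
           (\<forall>s. s \<noteq> 0 \<and> s \<noteq> 1 \<and>
                (\<forall>k<K. of_real (lam k) * s + mu k \<notin> \<int>\<^sub>\<le>\<^sub>0 \<and>
                        of_real (lam k) * (1 - cnj s) + mu k \<notin> \<int>\<^sub>\<le>\<^sub>0) \<longrightarrow>
              (F s / (s - 1) ^ m) * gamma_factor Q K lam mu s =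
              \<omega> * cnj (gamma_factor Q K lam mu (1 - cnj s) *
                        (F (1 - cnj s) / ((1 - cnj s) - 1) ^ m))))) \<and>
     (\<exists>(d::nat) (\<alpha>::nat \<Rightarrow> nat \<Rightarrow> complex) (\<theta>::real) c. \<theta> < 1/4 \<and>
        (\<forall>p j. prime p \<and> j < d \<longrightarrow> norm (\<alpha> p j) \<le> c * real p powr \<theta>) \<and>
        (\<forall>s. 1 < Re s \<longrightarrow>
           (\<lambda>n. if prime n then (\<Prod>j<d. inverse (1 - \<alpha> n j / of_nat n powr s)) else 1)
             has_prod dser a s))"

definition ramanujan :: "(nat \<Rightarrow> complex) \<Rightarrow> bool" where
  "ramanujan a \<longleftrightarrow> (\<forall>\<epsilon>>0. \<exists>c. \<forall>n\<ge>1. norm (a n) \<le> c * real n powr \<epsilon>)"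

definition rcoef :: "(nat \<Rightarrow> nat \<Rightarrow> complex) \<Rightarrow> nat \<Rightarrow> nat \<Rightarrow> real \<Rightarrow> real \<Rightarrow> real \<Rightarrow> real \<Rightarrow> nat \<Rightarrow> complex" where
  "rcoef a H G C xe \<beta> T p =
     (if prime p \<and> xe \<le> real p \<and> real p \<le> \<beta> * ln T
      then ((\<Sum>h\<in>{1..H}. a h p) - (\<Sum>h\<in>{H<..H+G}. a h p)) / of_real C
      else 0)"

end

theory Submission
  imports Defs "HOL-Real_Asymp.Real_Asymp"
begin

definition DS :: "(nat \<Rightarrow> complex) \<Rightarrow> real \<Rightarrow> complex" where
  "DS c s = (\<Sum>\<^sub>\<infinity>n. c n / of_real (real n powr s))"
definition AS :: "(nat \<Rightarrow> complex) \<Rightarrow> real \<Rightarrow> bool" where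
  "AS c s \<longleftrightarrow> (\<lambda>n. c n / of_real (real n powr s)) summable_on UNIV"
definition tr :: "nat \<Rightarrow> complex \<Rightarrow> (nat \<Rightarrow> complex) \<Rightarrow> nat \<Rightarrow> complex" where
  "tr m \<beta> c n = c n - \<beta> * (if m dvd n then c (n div m) else 0)"

lemma tr_DS:
  assumes m: "m > 0" and A: "AS c s"
  shows "AS (tr m \<beta> c) s \<and> DS (tr m \<beta> c) s = DS c s * (1 - \<beta> / of_real (real m powr s))"
proof -
  define f where "f n = c n / of_real (real n powr s)" for n
  define g where "g n = (if m dvd n then c (n div m) else 0) / of_real (real n powr s)" for n
  have hf: "(f has_sum DS c s) UNIV" using A unfolding AS_def DS_def f_def
    using has_sum_infsum by blast
  have hf2: "((\<lambda>k. f k / of_real (real m powr s)) has_sum (DS c s / of_real (real m powr s))) UNIV"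
    using has_sum_cmult_right[OF hf, of "inverse (of_real (real m powr s))"] by (simp add: field_simps)
  have eq: "(\<lambda>k. f k / of_real (real m powr s)) = g \<circ> (\<lambda>k. m * k)"
  proof
    fix k
    have "real (m*k) powr s = real m powr s * real k powr s"
      by (simp add: powr_mult)
    then show "f k / of_real (real m powr s) = (g \<circ> (\<lambda>k. m * k)) k"
      using m by (simp add: f_def g_def)
  qed
  have inj: "inj_on (\<lambda>k. m * k) UNIV" using m by (auto simp: inj_on_def)
  have "(g has_sum (DS c s / of_real (real m powr s))) ((\<lambda>k. m * k) ` UNIV)"
    unfolding has_sum_reindex[OF inj] using hf2 eq by simp
  then have hg: "(g has_sum (DS c s / of_real (real m powr s))) UNIV"
    by (rule has_sum_cong_neutral[THEN iffD1, rotated -1]) (auto simp: g_def)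
  have "((\<lambda>n. f n + (-\<beta>) * g n) has_sum (DS c s + (-\<beta>) * (DS c s / of_real (real m powr s)))) UNIV"
    by (intro has_sum_add hf has_sum_cmult_right hg)
  moreover have "(\<lambda>n. f n + (-\<beta>) * g n) = (\<lambda>n. tr m \<beta> c n / of_real (real n powr s))"
    by (auto simp: f_def g_def tr_def diff_divide_distrib)
  ultimately have H: "((\<lambda>n. tr m \<beta> c n / of_real (real n powr s)) has_sum (DS c s * (1 - \<beta> / of_real (real m powr s)))) UNIV"
    by (simp add: algebra_simps)
  show ?thesis
    using H unfolding AS_def DS_def
    by (auto simp: summable_on_def infsumI)
qed

fun trs :: "(nat \<times> complex) list \<Rightarrow> (nat \<Rightarrow> complex) \<Rightarrow> nat \<Rightarrow> complex" where
  "trs [] c = c"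
| "trs ((m,\<beta>)#L) c = tr m \<beta> (trs L c)"

lemma trs_DS:
  assumes "\<forall>x\<in>set L. fst x > 0" and "AS c s"
  shows "AS (trs L c) s \<and> DS (trs L c) s = DS c s * prod_list (map (\<lambda>(m,\<beta>). 1 - \<beta> / of_real (real m powr s)) L)"
  using assms
proof (induction L)
  case Nil
  then show ?case by simp
next
  case (Cons x L)
  obtain m \<beta> where x: "x = (m,\<beta>)" by force
  from Cons have IH: "AS (trs L c) s" "DS (trs L c) s = DS c s * prod_list (map (\<lambda>(m,\<beta>). 1 - \<beta> / of_real (real m powr s)) L)" by auto
  have m: "m > 0" using Cons.prems x by auto
  show ?case using tr_DS[OF m IH(1), of \<beta>] IH(2) x by (simp add: algebra_simps)
qed

lemma trs_one:
  assumes "\<forall>x\<in>set L. fst x > 1"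
  shows "trs L c 1 = c 1"
  using assms
proof (induction L)
  case Nil then show ?case by simp
next
  case (Cons x L)
  obtain m \<beta> where x: "x = (m,\<beta>)" by force
  then show ?case using Cons by (auto simp: tr_def)
qed

lemma fps_shift_step:
  fixes u :: "nat \<Rightarrow> complex"
  shows "Abs_fps (\<lambda>i. u i - \<beta> * (if i = 0 then 0 else u (i - 1))) = Abs_fps u * (1 - fps_const \<beta> * fps_X)"
proof (rule fps_ext)
  fix i
  have "fps_nth (Abs_fps u * (1 - fps_const \<beta> * fps_X)) i = u i - \<beta> * fps_nth (fps_X * Abs_fps u) i"
    by (simp add: algebra_simps)
  also have "\<dots> = u i - \<beta> * (if i = 0 then 0 else u (i - 1))"
    by (simp add: fps_X_mult_nth)
  finally show "fps_nth (Abs_fps (\<lambda>i. u i - \<beta> * (if i = 0 then 0 else u (i - 1)))) i = fps_nth (Abs_fps u * (1 - fps_const \<beta> * fps_X)) i"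
    by simp
qed

lemma tr_ppow:
  assumes p: "prime p" and m: "prime m"
  shows "tr m \<beta> c (p ^ i) = (if m = p then c (p ^ i) - \<beta> * (if i = 0 then 0 else c (p ^ (i - 1))) else c (p ^ i))"
proof (cases "m = p")
  case True
  then show ?thesis
  proof (cases i)
    case 0 then show ?thesis using True p by (auto simp: tr_def prime_gt_1_nat)
  next
    case (Suc k)
    then show ?thesis using True p by (auto simp: tr_def)
  qed
next
  case False
  have "\<not> m dvd p ^ i"
  proof
    assume "m dvd p ^ i"
    then have "m dvd p" using prime_dvd_power m by blast
    then show False using False p m primes_dvd_imp_eq by blast
  qed
  then show ?thesis using False by (simp add: tr_def)
qed

lemma trs_ppow_fps:
  assumes p: "prime p" and L: "\<forall>x\<in>set L. prime (fst x)"
  shows "Abs_fps (\<lambda>i. trs L c (p ^ i)) = Abs_fps (\<lambda>i. c (p ^ i)) *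
           prod_list (map (\<lambda>(m,\<beta>). if m = p then 1 - fps_const \<beta> * fps_X else 1) L)"
  using L
proof (induction L)
  case Nil then show ?case by simp
next
  case (Cons x L)
  obtain m \<beta> where x: "x = (m,\<beta>)" by force
  have m: "prime m" using Cons.prems x by auto
  have IH: "Abs_fps (\<lambda>i. trs L c (p ^ i)) = Abs_fps (\<lambda>i. c (p ^ i)) *
           prod_list (map (\<lambda>(m,\<beta>). if m = p then 1 - fps_const \<beta> * fps_X else 1) L)"
    using Cons by auto
  show ?case
  proof (cases "m = p")
    case True
    have "Abs_fps (\<lambda>i. trs (x#L) c (p ^ i)) = Abs_fps (\<lambda>i. trs L c (p ^ i) - \<beta> * (if i = 0 then 0 else trs L c (p ^ (i - 1))))"
      using tr_ppow[OF p m] True x by simp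
    also have "\<dots> = Abs_fps (\<lambda>i. trs L c (p ^ i)) * (1 - fps_const \<beta> * fps_X)"
      by (rule fps_shift_step)
    finally show ?thesis using IH True x by (simp add: algebra_simps)
  next
    case False
    have "Abs_fps (\<lambda>i. trs (x#L) c (p ^ i)) = Abs_fps (\<lambda>i. trs L c (p ^ i))"
      using tr_ppow[OF p m] False x by simp
    then show ?thesis using IH False x by simp
  qed
qed

definition LN :: "(nat \<Rightarrow> nat \<Rightarrow> complex) \<Rightarrow> nat \<Rightarrow> nat \<Rightarrow> (nat \<times> complex) list" where
  "LN \<alpha> d N = concat (map (\<lambda>q. map (\<lambda>j. (q, \<alpha> q j)) [0..<d]) (filter prime [0..<Suc N]))"

lemma LN_set: "x \<in> set (LN \<alpha> d N) \<Longrightarrow> prime (fst x)"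
  by (auto simp: LN_def simp del: upt_Suc)

lemma prod_list_concat: "prod_list (concat xss) = prod_list (map prod_list xss)"
  by (induction xss) auto

lemma prod_list_LN:
  fixes F :: "nat \<Rightarrow> complex \<Rightarrow> 'b::comm_monoid_mult"
  shows "prod_list (map (\<lambda>(m,\<beta>). F m \<beta>) (LN \<alpha> d N)) = (\<Prod>q | prime q \<and> q \<le> N. \<Prod>j<d. F q (\<alpha> q j))"
proof -
  have "prod_list (map (\<lambda>(m,\<beta>). F m \<beta>) (LN \<alpha> d N)) =
        prod_list (map (\<lambda>q. prod_list (map (\<lambda>j. F q (\<alpha> q j)) [0..<d])) (filter prime [0..<Suc N]))"
    by (simp add: LN_def prod_list_concat map_concat comp_def del: upt_Suc)
  also have "\<dots> = prod_list (map (\<lambda>q. \<Prod>j<d. F q (\<alpha> q j)) (filter prime [0..<Suc N]))"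
    by (simp add: prod.distinct_set_conv_list[symmetric] atLeast0LessThan del: upt_Suc)
  also have "\<dots> = (\<Prod>q \<in> set (filter prime [0..<Suc N]). \<Prod>j<d. F q (\<alpha> q j))"
    by (rule prod.distinct_set_conv_list[symmetric]) (simp del: upt_Suc)
  also have "set (filter prime [0..<Suc N]) = {q. prime q \<and> q \<le> N}" by (auto simp del: upt_Suc)
  finally show ?thesis by simp
qed

lemma powr_lt1_tendsto0:
  fixes x :: real
  assumes "0 < x" "x < 1"
  shows "((\<lambda>s. x powr s) \<longlongrightarrow> 0) at_top"
proof -
  have "LIM s at_top. ln x * s :> at_bot"
    by (rule filterlim_tendsto_neg_mult_at_bot[OF tendsto_const]) (use assms in \<open>auto intro: filterlim_ident\<close>)
  then have "((\<lambda>s. exp (ln x * s)) \<longlongrightarrow> 0) at_top"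
    using exp_at_bot filterlim_compose by blast
  then show ?thesis using assms by (simp add: powr_def mult.commute)
qed

lemma AS_norm:
  assumes "AS c s"
  shows "(\<lambda>n. norm (c n) / real n powr s) summable_on UNIV"
proof -
  have "(\<lambda>n. norm (c n / of_real (real n powr s))) summable_on UNIV"
    using assms unfolding AS_def by (subst (asm) summable_on_iff_abs_summable_on_complex)
  then show ?thesis by (simp add: norm_divide)
qed

lemma peel_step:
  assumes AS: "\<And>s. s \<ge> s1 \<Longrightarrow> AS c s" and c1: "c 1 = 1"
    and prev: "\<And>n. 2 \<le> n \<Longrightarrow> n < n0 \<Longrightarrow> c n = 0" and n0: "n0 \<ge> 2"
    and lim: "((\<lambda>s. real n0 powr s * norm (DS c s - 1)) \<longlongrightarrow> 0) at_top"
  shows "c n0 = 0"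
proof -
  define W where "W = (\<Sum>\<^sub>\<infinity>n. norm (c n) / real n powr s1)"
  have gsum: "(\<lambda>n. norm (c n) / real n powr s1) summable_on UNIV"
    using AS_norm[OF AS[of s1]] by simp
  have key: "norm (c n0) \<le> real n0 powr s * norm (DS c s - 1) + W * (real (Suc n0) powr s1 * (real n0 / real (Suc n0)) powr s)"
    if s: "s \<ge> s1" for s
  proof -
    define f where "f n = c n / of_real (real n powr s)" for n
    have fs: "f summable_on UNIV" using AS[OF s] unfolding AS_def f_def by simp
    define B where "B = {n0<..}"
    have fsB: "f summable_on B" using summable_on_subset_banach[OF fs] by auto
    have U: "UNIV = {..n0} \<union> B" "{..n0} \<inter> B = {}" by (auto simp: B_def)
    have "DS c s = infsum f ({..n0} \<union> B)" unfolding DS_def f_def U(1)[symmetric] by simp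
    also have "\<dots> = infsum f {..n0} + infsum f B"
      by (rule infsum_Un_disjoint) (use fsB U in auto)
    also have "infsum f {..n0} = sum f {..n0}" by simp
    also have "sum f {..n0} = sum (\<lambda>n. (if n = 1 then 1 else 0) + (if n = n0 then c n0 / of_real (real n0 powr s) else 0)) {..n0}"
    proof (rule sum.cong)
      fix n assume n: "n \<in> {..n0}"
      show "f n = (if n = 1 then 1 else 0) + (if n = n0 then c n0 / of_real (real n0 powr s) else 0)"
      proof (cases "n = 0 \<or> n = 1 \<or> n = n0")
        case True
        then show ?thesis using n0 c1 by (auto simp: f_def)
      next
        case False
        then show ?thesis using prev[of n] n by (auto simp: f_def)
      qed
    qed simp
    also have "\<dots> = 1 + c n0 / of_real (real n0 powr s)"
      using n0 by (simp add: sum.distrib)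
    finally have eqDS: "c n0 / of_real (real n0 powr s) = DS c s - 1 - infsum f B" by simp
    have p0: "real n0 powr s > 0" using n0 by simp
    have "norm (c n0) = real n0 powr s * norm (c n0 / of_real (real n0 powr s))"
      using p0 by (simp add: norm_divide)
    also have "\<dots> = real n0 powr s * norm (DS c s - 1 - infsum f B)" using eqDS by simp
    also have "\<dots> \<le> real n0 powr s * (norm (DS c s - 1) + norm (infsum f B))"
      by (intro mult_left_mono norm_triangle_ineq4) simp
    finally have 1: "norm (c n0) \<le> real n0 powr s * norm (DS c s - 1) + real n0 powr s * norm (infsum f B)"
      by (simp add: algebra_simps)
    have "norm (infsum f B) \<le> infsum (\<lambda>n. norm (f n)) B"
      by (rule norm_infsum_bound) (use fsB summable_on_iff_abs_summable_on_complex in blast)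
    also have "\<dots> \<le> infsum (\<lambda>n. real (Suc n0) powr (s1 - s) * (norm (c n) / real n powr s1)) B"
    proof (rule infsum_mono)
      show "(\<lambda>n. norm (f n)) summable_on B"
        using fsB summable_on_iff_abs_summable_on_complex by blast
      show "(\<lambda>n. real (Suc n0) powr (s1 - s) * (norm (c n) / real n powr s1)) summable_on B"
        by (intro summable_on_cmult_right summable_on_subset_banach[OF gsum]) auto
      fix n assume n: "n \<in> B"
      then have n1: "real n \<ge> real (Suc n0)" "real n > 0" by (auto simp: B_def)
      have "real n powr (s1 - s) \<le> real (Suc n0) powr (s1 - s)"
        by (rule powr_mono2') (use n1 s in auto)
      moreover have "inverse (real n powr s) = real n powr (s1 - s) / real n powr s1"
        using n1 by (simp add: powr_diff powr_minus divide_inverse)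
      ultimately have "inverse (real n powr s) \<le> real (Suc n0) powr (s1 - s) / real n powr s1"
        by (simp add: divide_right_mono)
      then have "norm (c n) * inverse (real n powr s) \<le> norm (c n) * (real (Suc n0) powr (s1 - s) / real n powr s1)"
        by (intro mult_left_mono) auto
      then show "norm (f n) \<le> real (Suc n0) powr (s1 - s) * (norm (c n) / real n powr s1)"
        by (simp add: f_def norm_divide norm_mult norm_inverse divide_inverse algebra_simps)
    qed
    also have "\<dots> = real (Suc n0) powr (s1 - s) * infsum (\<lambda>n. norm (c n) / real n powr s1) B"
      by (rule infsum_cmult_right) (intro summable_on_subset_banach[OF gsum], auto)
    also have "\<dots> \<le> real (Suc n0) powr (s1 - s) * W"
      unfolding W_def
      by (intro mult_left_mono infsum_mono_neutral gsum summable_on_subset_banach[OF gsum]) auto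
    finally have 2: "norm (infsum f B) \<le> real (Suc n0) powr (s1 - s) * W" .
    have "real n0 powr s * real (Suc n0) powr (s1 - s) = real (Suc n0) powr s1 * (real n0 / real (Suc n0)) powr s"
      using n0 by (simp add: powr_diff powr_divide)
    then have "real n0 powr s * norm (infsum f B) \<le> W * (real (Suc n0) powr s1 * (real n0 / real (Suc n0)) powr s)"
      using mult_left_mono[OF 2, of "real n0 powr s"] p0 by (simp add: algebra_simps)
    with 1 show ?thesis by linarith
  qed
  have lim2: "((\<lambda>s. real n0 powr s * norm (DS c s - 1) + W * (real (Suc n0) powr s1 * (real n0 / real (Suc n0)) powr s)) \<longlongrightarrow> 0 + W * (real (Suc n0) powr s1 * 0)) at_top"
    by (intro tendsto_add lim tendsto_mult tendsto_const powr_lt1_tendsto0) (use n0 in auto)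
  have "norm (c n0) \<le> 0"
    by (rule tendsto_lowerbound[OF lim2[simplified]]) (use key in \<open>auto simp: eventually_at_top_linorder\<close>)
  then show ?thesis by simp
qed

lemma peel:
  assumes AS: "\<And>s. s \<ge> s1 \<Longrightarrow> AS c s" and c1: "c 1 = 1"
    and lim: "\<And>n0. 2 \<le> n0 \<Longrightarrow> n0 \<le> N \<Longrightarrow> ((\<lambda>s. real n0 powr s * norm (DS c s - 1)) \<longlongrightarrow> 0) at_top"
  shows "\<And>n. 2 \<le> n \<Longrightarrow> n \<le> N \<Longrightarrow> c n = 0"
proof -
  fix n show "2 \<le> n \<Longrightarrow> n \<le> N \<Longrightarrow> c n = 0"
  proof (induction n rule: less_induct)
    case (less n)
    show ?case
      by (rule peel_step[OF AS c1 _ less.prems(1) lim[OF less.prems]]) (use less in auto)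
  qed
qed

lemma exp_minus1_le: "0 \<le> (t::real) \<Longrightarrow> t \<le> 1 \<Longrightarrow> exp t - 1 \<le> 2 * t"
  using exp_bound[of t] by (simp add: power2_eq_square) (smt (verit) mult_left_le_one_le)

lemma has_prod_minus1_bound:
  fixes f :: "nat \<Rightarrow> complex"
  assumes P: "f has_prod P" and e: "\<And>n. norm (f n - 1) \<le> e n" and s: "summable e"
  shows "norm (P - 1) \<le> exp (suminf e) - 1"
proof -
  have e0: "e n \<ge> 0" for n using e[of n] norm_ge_zero order_trans by blast
  have lim: "(\<lambda>n. norm ((\<Prod>k\<le>n. f k) - 1)) \<longlonglongrightarrow> norm (P - 1)"
    by (intro tendsto_norm tendsto_diff has_prod_imp_tendsto[OF P] tendsto_const)
  have "norm ((\<Prod>k\<le>n. f k) - 1) \<le> exp (suminf e) - 1" for n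
  proof -
    have "norm ((\<Prod>k\<le>n. f k) - 1) = norm ((\<Prod>k\<le>n. 1 + (f k - 1)) - 1)" by simp
    also have "\<dots> \<le> (\<Prod>k\<le>n. 1 + norm (f k - 1)) - 1"
      by (rule norm_prod_minus1_le_prod_minus1)
    also have "(\<Prod>k\<le>n. 1 + norm (f k - 1)) \<le> exp (\<Sum>k\<le>n. norm (f k - 1))"
      by (rule prod_le_exp_sum) simp
    also have "(\<Sum>k\<le>n. norm (f k - 1)) \<le> (\<Sum>k\<le>n. e k)" by (intro sum_mono e)
    also have "(\<Sum>k\<le>n. e k) \<le> suminf e"
      using sum_le_suminf[OF s, of "{..n}"] e0 by auto
    finally show ?thesis by simp
  qed
  then show ?thesis
    by (intro tendsto_upperbound[OF lim]) (auto simp: eventually_sequentially)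
qed

lemma E_bound:
  fixes z :: "nat \<Rightarrow> complex"
  assumes z: "\<And>j. j < d \<Longrightarrow> norm (z j) \<le> x" and x: "x \<le> 1/2" "2 * real d * x \<le> 1"
  shows "norm ((\<Prod>j<d. inverse (1 - z j)) - 1) \<le> 4 * real d * x"
proof -
  define w where "w j = inverse (1 - z j) - 1" for j
  have x0: "x \<ge> 0" if "d > 0" using z[of 0] that norm_ge_zero order_trans by blast
  have w: "norm (w j) \<le> 2 * x" if j: "j < d" for j
  proof -
    have nz: "norm (z j) \<le> 1/2" using z[OF j] x by simp
    have ne: "1 - z j \<noteq> 0" using nz by (auto simp: )
    have "norm (1 - z j) \<ge> 1 - norm (z j)" using norm_triangle_ineq2[of 1 "z j"] by simp
    then have n1: "norm (1 - z j) \<ge> 1/2" using nz by simp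
    have "w j = z j / (1 - z j)" using ne by (simp add: w_def field_simps)
    then have "norm (w j) = norm (z j) / norm (1 - z j)" by (simp add: norm_divide)
    also have "\<dots> \<le> norm (z j) / (1/2)" using n1 by (intro divide_left_mono) auto
    also have "\<dots> \<le> 2 * x" using z[OF j] by simp
    finally show ?thesis .
  qed
  have "norm ((\<Prod>j<d. inverse (1 - z j)) - 1) = norm ((\<Prod>j<d. 1 + w j) - 1)" by (simp add: w_def)
  also have "\<dots> \<le> (\<Prod>j<d. 1 + norm (w j)) - 1" by (rule norm_prod_minus1_le_prod_minus1)
  also have "(\<Prod>j<d. 1 + norm (w j)) \<le> exp (\<Sum>j<d. norm (w j))" by (rule prod_le_exp_sum) simp
  also have "(\<Sum>j<d. norm (w j)) \<le> (\<Sum>j<d. 2 * x)" by (intro sum_mono w) simp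
  also have "(\<Sum>j<d. 2 * x) = 2 * real d * x" by simp
  finally have 1: "norm ((\<Prod>j<d. inverse (1 - z j)) - 1) \<le> exp (2 * real d * x) - 1" by simp
  show ?thesis
  proof (cases "d = 0")
    case True then show ?thesis using 1 by simp
  next
    case False
    then have "exp (2 * real d * x) - 1 \<le> 2 * (2 * real d * x)"
      using x0 x by (intro exp_minus1_le) auto
    then show ?thesis using 1 by simp
  qed
qed

lemma euler_vanish:
  fixes a :: "nat \<Rightarrow> complex" and \<alpha> :: "nat \<Rightarrow> nat \<Rightarrow> complex" and K \<theta> :: real
  assumes a1: "a 1 = 1"
    and summ: "\<And>s. s > 1 \<Longrightarrow> AS a s"
    and bnd: "\<And>p j. prime p \<Longrightarrow> j < d \<Longrightarrow> norm (\<alpha> p j) \<le> K * real p powr \<theta>"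
    and K: "K > 0"
    and prod: "\<And>s. s > 1 \<Longrightarrow> (\<lambda>n. if prime n then \<Prod>j<d. inverse (1 - \<alpha> n j / of_real (real n powr s)) else 1) has_prod DS a s"
  shows "2 \<le> n \<Longrightarrow> n \<le> N \<Longrightarrow> trs (LN \<alpha> d N) a n = 0"
proof -
  define c where "c = trs (LN \<alpha> d N) a"
  have Lpos: "\<forall>x\<in>set (LN \<alpha> d N). fst x > 0" using LN_set prime_gt_0_nat by blast
  have Lgt1: "\<forall>x\<in>set (LN \<alpha> d N). fst x > 1" using LN_set prime_gt_1_nat by blast
  have ASc: "AS c s" if "s \<ge> 2" for s
    using trs_DS[OF Lpos summ, of s] that unfolding c_def by auto
  have DSc: "DS c s = DS a s * (\<Prod>q | prime q \<and> q \<le> N. \<Prod>j<d. 1 - \<alpha> q j / of_real (real q powr s))"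
    if "s \<ge> 2" for s
    using trs_DS[OF Lpos summ, of s] that prod_list_LN[of "\<lambda>m \<beta>. 1 - \<beta> / of_real (real m powr s)"]
    unfolding c_def by auto
  have c1: "c 1 = 1" using trs_one[OF Lgt1] a1 unfolding c_def by simp
  have ev: "\<forall>\<^sub>F s in at_top. K * (2 * real d + 2) * 2 powr (\<theta> - s) \<le> 1 \<and> s \<ge> 2 \<and> \<theta> - s < -1"
    by (intro eventually_conj; real_asymp)
  then obtain s0 where s0: "\<And>s. s \<ge> s0 \<Longrightarrow> K * (2 * real d + 2) * 2 powr (\<theta> - s) \<le> 1 \<and> s \<ge> 2 \<and> \<theta> - s < -1"
    by (auto simp: eventually_at_top_linorder)
  define Z where "Z = (\<Sum>n. 4 * real d * K * real n powr (\<theta> - s0))"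
  have Zs: "summable (\<lambda>n. 4 * real d * K * real n powr (\<theta> - s0))"
    using s0[of s0] by (intro summable_mult) (simp add: summable_real_powr_iff)
  have Z0: "Z \<ge> 0" unfolding Z_def using K by (intro suminf_nonneg Zs) auto
  have main: "norm (DS c s - 1) \<le> exp (real (Suc N) powr (s0 - s) * Z) - 1" if s: "s \<ge> s0" for s
  proof -
    have s2: "s \<ge> 2" and sm: "\<theta> - s < -1" and sK: "K * (2 * real d + 2) * 2 powr (\<theta> - s) \<le> 1"
      using s0[OF s] by auto
    have xb: "K * real n powr (\<theta> - s) \<le> 1/2 \<and> 2 * real d * (K * real n powr (\<theta> - s)) \<le> 1" if n: "n \<ge> 2" for n
    proof -
      have "real n powr (\<theta> - s) \<le> 2 powr (\<theta> - s)"
        by (rule powr_mono2') (use n sm in auto)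
      then have "K * real n powr (\<theta> - s) \<le> K * 2 powr (\<theta> - s)" using K by simp
      moreover have "K * 2 powr (\<theta> - s) * (2 * real d + 2) \<le> 1" using sK by (simp add: algebra_simps)
      moreover have "K * 2 powr (\<theta> - s) \<ge> 0" using K by simp
      ultimately have h: "K * real n powr (\<theta> - s) \<le> K * 2 powr (\<theta> - s)" "K * 2 powr (\<theta> - s) * (2 * real d + 2) \<le> 1" "0 \<le> K * 2 powr (\<theta> - s)"
        by (auto simp: algebra_simps)
      define y where "y = K * 2 powr (\<theta> - s)"
      define x where "x = K * real n powr (\<theta> - s)"
      have h': "x \<le> y" "y * (2 * real d + 2) \<le> 1" "0 \<le> y" using h unfolding x_def y_def by auto
      have e1: "2 * real d * y + 2 * y \<le> 1" using h'(2) by (simp add: algebra_simps)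
      have e2: "2 * real d * x \<le> 2 * real d * y" using h' by (intro mult_left_mono) auto
      have e3: "0 \<le> 2 * real d * y" using h'(3) by simp
      have "x \<le> 1/2" using e1 e3 h'(1) by linarith
      moreover have "2 * real d * x \<le> 1" using e1 e2 h'(3) by linarith
      ultimately have "x \<le> 1/2 \<and> 2 * real d * x \<le> 1" by blast
      then show ?thesis unfolding x_def .
    qed
    have zb: "norm (\<alpha> n j / of_real (real n powr s)) \<le> K * real n powr (\<theta> - s)" if "prime n" "j < d" for n j
    proof -
      have pos: "real n powr s > 0" using that prime_gt_0_nat by simp
      have "norm (\<alpha> n j / of_real (real n powr s)) = norm (\<alpha> n j) / real n powr s"
        by (simp add: norm_divide)
      also have "\<dots> \<le> K * real n powr \<theta> / real n powr s"
        by (intro divide_right_mono bnd that) simp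
      also have "\<dots> = K * real n powr (\<theta> - s)" by (simp add: powr_diff)
      finally show ?thesis .
    qed
    define E where "E n = (if prime n then \<Prod>j<d. inverse (1 - \<alpha> n j / of_real (real n powr s)) else 1)" for n
    have Enz: "E n \<noteq> 0" for n
    proof (cases "prime n")
      case True
      have "1 - \<alpha> n j / of_real (real n powr s) \<noteq> 0" if "j < d" for j
      proof
        assume "1 - \<alpha> n j / of_real (real n powr s) = 0"
        then have "norm (\<alpha> n j / of_real (real n powr s)) = 1" by simp
        moreover have "norm (\<alpha> n j / of_real (real n powr s)) \<le> 1/2"
          using zb[OF True that] xb[of n] True prime_ge_2_nat by fastforce
        ultimately show False by simp
      qed
      then show ?thesis using True by (simp add: E_def)
    qed (simp add: E_def)
    have hp: "E has_prod DS a s" unfolding E_def using prod[of s] s2 by simp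
    have hp2: "(\<lambda>n. E n / (if n \<in> {..N} then E n else 1)) has_prod (DS a s / (\<Prod>n\<in>{..N}. E n))"
      by (rule has_prod_divide[OF hp has_prod_If_finite_set]) simp
    have eqf: "(\<lambda>n. E n / (if n \<in> {..N} then E n else 1)) = (\<lambda>n. if n \<le> N then 1 else E n)"
      using Enz by (auto simp: fun_eq_iff)
    have "(\<Prod>n\<in>{..N}. E n) = (\<Prod>n\<in>{..N}. if prime n then \<Prod>j<d. inverse (1 - \<alpha> n j / of_real (real n powr s)) else 1)"
      by (simp add: E_def)
    also have "\<dots> = (\<Prod>q | prime q \<and> q \<le> N. \<Prod>j<d. inverse (1 - \<alpha> q j / of_real (real q powr s)))"
      by (subst prod.If_cases) (auto intro!: prod.cong)
    also have "\<dots> = inverse (\<Prod>q | prime q \<and> q \<le> N. \<Prod>j<d. 1 - \<alpha> q j / of_real (real q powr s))"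
      by (simp add: prod_inversef[symmetric] comp_def)
    finally have "DS a s / (\<Prod>n\<in>{..N}. E n) = DS c s"
      using DSc[OF s2] by (simp add: divide_inverse)
    with hp2 eqf have hp3: "(\<lambda>n. if n \<le> N then 1 else E n) has_prod DS c s" by simp
    define e where "e n = (if prime n \<and> N < n then 4 * real d * (K * real n powr (\<theta> - s)) else 0)" for n
    have ebound: "norm ((if n \<le> N then 1 else E n) - 1) \<le> e n" for n
    proof (cases "prime n \<and> N < n")
      case True
      have En: "E n = (\<Prod>j<d. inverse (1 - \<alpha> n j / of_real (real n powr s)))" using True by (simp add: E_def)
      have xbn: "K * real n powr (\<theta> - s) \<le> 1/2" "2 * real d * (K * real n powr (\<theta> - s)) \<le> 1"
        using xb[of n] prime_ge_2_nat[of n] True by auto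
      have "norm ((\<Prod>j<d. inverse (1 - \<alpha> n j / of_real (real n powr s))) - 1) \<le> 4 * real d * (K * real n powr (\<theta> - s))"
        by (rule E_bound[OF zb xbn]) (use True in auto)
      then have "norm (E n - 1) \<le> 4 * real d * (K * real n powr (\<theta> - s))" using En by simp
      then show ?thesis using True by (simp add: e_def)
    qed (auto simp: e_def E_def)
    have eb2: "e n \<le> real (Suc N) powr (s0 - s) * (4 * real d * K * real n powr (\<theta> - s0))" for n
    proof (cases "prime n \<and> N < n")
      case True
      then have n1: "real n \<ge> real (Suc N)" "real n > 0" by auto
      have "real n powr (s0 - s) \<le> real (Suc N) powr (s0 - s)"
        by (rule powr_mono2') (use n1 s in auto)
      then have "real n powr (\<theta> - s0) * real n powr (s0 - s) \<le> real n powr (\<theta> - s0) * real (Suc N) powr (s0 - s)"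
        by (intro mult_left_mono) auto
      then have "real n powr (\<theta> - s) \<le> real n powr (\<theta> - s0) * real (Suc N) powr (s0 - s)"
        by (simp add: powr_add[symmetric])
      then have "4 * real d * K * real n powr (\<theta> - s) \<le> 4 * real d * K * (real n powr (\<theta> - s0) * real (Suc N) powr (s0 - s))"
        using K by (intro mult_left_mono) auto
      then show ?thesis using True by (simp add: e_def algebra_simps)
    next
      case False
      then have "e n = 0" unfolding e_def by (simp only: if_False)
      then show ?thesis using K by simp
    qed
    have e0: "e n \<ge> 0" for n using K by (simp add: e_def)
    have es: "summable e"
      by (rule summable_comparison_test'[OF summable_mult[OF Zs, of "real (Suc N) powr (s0 - s)"]])
         (use eb2 e0 in \<open>metis abs_of_nonneg real_norm_def\<close>)
    have "norm (DS c s - 1) \<le> exp (suminf e) - 1"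
      by (rule has_prod_minus1_bound[OF hp3 ebound es])
    also have "suminf e \<le> (\<Sum>n. real (Suc N) powr (s0 - s) * (4 * real d * K * real n powr (\<theta> - s0)))"
      by (intro suminf_le eb2 es summable_mult Zs)
    also have "\<dots> = real (Suc N) powr (s0 - s) * Z" unfolding Z_def by (rule suminf_mult[OF Zs])
    finally show ?thesis by simp
  qed
  have lim: "((\<lambda>s. real n0 powr s * norm (DS c s - 1)) \<longlongrightarrow> 0) at_top" if n0: "2 \<le> n0" "n0 \<le> N" for n0
  proof -
    have Ylim: "((\<lambda>s. real (Suc N) powr s0 * Z * (1 / real (Suc N)) powr s) \<longlongrightarrow> real (Suc N) powr s0 * Z * 0) at_top"
      by (intro tendsto_mult tendsto_const powr_lt1_tendsto0) (use n0 in auto)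
    have Yeq: "real (Suc N) powr (s0 - s) * Z = real (Suc N) powr s0 * Z * (1 / real (Suc N)) powr s" for s
      by (simp add: powr_diff powr_divide)
    have "\<forall>\<^sub>F s in at_top. real (Suc N) powr s0 * Z * (1 / real (Suc N)) powr s < 1"
      using order_tendstoD(2)[OF Ylim, of 1] by simp
    then have "\<forall>\<^sub>F s in at_top. real (Suc N) powr (s0 - s) * Z \<le> 1"
      by (rule eventually_mono) (simp only: Yeq)
    moreover have "\<forall>\<^sub>F s in at_top. s \<ge> s0" by (rule eventually_ge_at_top)
    ultimately have ev2: "\<forall>\<^sub>F s in at_top. real n0 powr s * norm (DS c s - 1) \<le> 2 * Z * real (Suc N) powr s0 * (real n0 / real (Suc N)) powr s"
    proof eventually_elim
      case (elim s)
      have Y0: "real (Suc N) powr (s0 - s) * Z \<ge> 0" using Z0 by simp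
      have "norm (DS c s - 1) \<le> 2 * (real (Suc N) powr (s0 - s) * Z)"
        using main[OF elim(2)] exp_minus1_le[OF Y0 elim(1)] by linarith
      then have "real n0 powr s * norm (DS c s - 1) \<le> real n0 powr s * (2 * (real (Suc N) powr (s0 - s) * Z))"
        by (intro mult_left_mono) auto
      also have "\<dots> = 2 * Z * real (Suc N) powr s0 * (real n0 / real (Suc N)) powr s"
        by (simp add: powr_diff powr_divide)
      finally show ?case .
    qed
    have ul: "((\<lambda>s. 2 * Z * real (Suc N) powr s0 * (real n0 / real (Suc N)) powr s) \<longlongrightarrow> 2 * Z * real (Suc N) powr s0 * 0) at_top"
      by (intro tendsto_mult tendsto_const powr_lt1_tendsto0) (use n0 in auto)
    then have ul': "((\<lambda>s. 2 * Z * real (Suc N) powr s0 * (real n0 / real (Suc N)) powr s) \<longlongrightarrow> 0) at_top"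
      by (simp only: mult_zero_right)
    show ?thesis
      by (rule tendsto_sandwich[OF _ ev2 tendsto_const ul']) auto
  qed
  show "2 \<le> n \<Longrightarrow> n \<le> N \<Longrightarrow> trs (LN \<alpha> d N) a n = 0"
    using peel[of 2 c N, OF ASc c1 lim] unfolding c_def by blast
qed

lemma Pfps:
  fixes b :: "nat \<Rightarrow> complex"
  shows "fps_conv_radius (\<Prod>j<d. 1 - fps_const (b j) * fps_X) = \<infinity> \<and>
         eval_fps (\<Prod>j<d. 1 - fps_const (b j) * fps_X) z = (\<Prod>j<d. 1 - b j * z) \<and>
         fps_nth (\<Prod>j<d. 1 - fps_const (b j) * fps_X) 0 = 1 \<and>
         fps_nth (\<Prod>j<d. 1 - fps_const (b j) * fps_X) 1 = - (\<Sum>j<d. b j)"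
proof (induction d)
  case 0
  then show ?case by simp
next
  case (Suc d)
  define Q where "Q = (\<Prod>j<d. 1 - fps_const (b j) * fps_X)"
  define F where "F = 1 - fps_const (b d) * fps_X"
  have IH: "fps_conv_radius Q = \<infinity>" "eval_fps Q z = (\<Prod>j<d. 1 - b j * z)" "fps_nth Q 0 = 1" "fps_nth Q 1 = - (\<Sum>j<d. b j)"
    using Suc unfolding Q_def by auto
  have rF0: "fps_conv_radius (fps_const (b d) * fps_X) = \<infinity>"
    using fps_conv_radius_mult[of "fps_const (b d)" fps_X] by simp
  have rF: "fps_conv_radius F = \<infinity>"
    using fps_conv_radius_diff[of 1 "fps_const (b d) * fps_X"] rF0 unfolding F_def by simp
  have eF: "eval_fps F z = 1 - b d * z"
    unfolding F_def by (subst eval_fps_diff) (auto simp: rF0 eval_fps_mult)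
  have P: "(\<Prod>j<Suc d. 1 - fps_const (b j) * fps_X) = Q * F" by (simp add: Q_def F_def)
  have r: "fps_conv_radius (Q * F) = \<infinity>"
    using fps_conv_radius_mult[of Q F] IH(1) rF by simp
  have e: "eval_fps (Q * F) z = (\<Prod>j<Suc d. 1 - b j * z)"
    by (subst eval_fps_mult) (auto simp: IH rF eF)
  have n0: "fps_nth (Q * F) 0 = 1" using IH by (simp add: F_def)
  have "fps_nth (Q * F) 1 = fps_nth Q 1 - b d * fps_nth (fps_X * Q) 1"
    by (simp add: F_def algebra_simps)
  also have "\<dots> = - (\<Sum>j<Suc d. b j)" using IH by (simp add: fps_X_mult_nth)
  finally show ?case using P r e n0 by simp
qed

lemma LN_fps:
  assumes p: "prime p" "p \<le> N"
  shows "prod_list (map (\<lambda>(m,\<beta>). if m = p then 1 - fps_const \<beta> * fps_X else 1) (LN \<alpha> d N)) =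
         (\<Prod>j<d. 1 - fps_const (\<alpha> p j) * fps_X)"
proof -
  have "prod_list (map (\<lambda>(m,\<beta>). if m = p then 1 - fps_const \<beta> * fps_X else 1) (LN \<alpha> d N)) =
        (\<Prod>q | prime q \<and> q \<le> N. \<Prod>j<d. (if q = p then 1 - fps_const (\<alpha> q j) * fps_X else 1))"
    by (rule prod_list_LN)
  also have "\<dots> = (\<Prod>q | prime q \<and> q \<le> N. if q = p then (\<Prod>j<d. 1 - fps_const (\<alpha> p j) * fps_X) else 1)"
    by (intro prod.cong) auto
  also have "\<dots> = (\<Prod>j<d. 1 - fps_const (\<alpha> p j) * fps_X)"
    by (subst prod.delta) (use p in auto)
  finally show ?thesis .
qed

lemma cpowr_nat_real: "(of_nat n :: complex) powr (of_real s) = of_real (real n powr s)"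
  using powr_of_real[of "real n" s] by simp

lemma fps_AP_one:
  fixes a :: "nat \<Rightarrow> complex" and \<alpha> :: "nat \<Rightarrow> nat \<Rightarrow> complex" and K \<theta> :: real
  assumes a1: "a 1 = 1"
    and summ: "\<And>s. s > 1 \<Longrightarrow> AS a s"
    and bnd: "\<And>p j. prime p \<Longrightarrow> j < d \<Longrightarrow> norm (\<alpha> p j) \<le> K * real p powr \<theta>"
    and K: "K > 0"
    and prod: "\<And>s. s > 1 \<Longrightarrow> (\<lambda>n. if prime n then \<Prod>j<d. inverse (1 - \<alpha> n j / of_real (real n powr s)) else 1) has_prod DS a s"
    and p: "prime p"
  shows "Abs_fps (\<lambda>k. a (p ^ k)) * (\<Prod>j<d. 1 - fps_const (\<alpha> p j) * fps_X) = 1"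
proof (rule fps_ext)
  fix i
  have L: "\<forall>x\<in>set (LN \<alpha> d N). prime (fst x)" for N using LN_set by blast
  have key: "Abs_fps (\<lambda>k. trs (LN \<alpha> d N) a (p ^ k)) = Abs_fps (\<lambda>k. a (p ^ k)) * (\<Prod>j<d. 1 - fps_const (\<alpha> p j) * fps_X)"
    if "p \<le> N" for N
    using trs_ppow_fps[OF p L, of N a] LN_fps[OF p that, of \<alpha> d] by simp
  show "fps_nth (Abs_fps (\<lambda>k. a (p ^ k)) * (\<Prod>j<d. 1 - fps_const (\<alpha> p j) * fps_X)) i = fps_nth 1 i"
  proof (cases "i = 0")
    case True
    have "\<forall>x\<in>set (LN \<alpha> d p). fst x > 1" using LN_set prime_gt_1_nat by blast
    then have "trs (LN \<alpha> d p) a 1 = 1" using trs_one a1 by metis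
    then show ?thesis unfolding key[OF order_refl, symmetric] using True by simp
  next
    case False
    have "p ^ 1 \<le> p ^ i" by (rule power_increasing) (use False prime_gt_0_nat[OF p] in auto)
    then have pi: "p \<le> p ^ i" by simp
    have "2 \<le> p ^ i" using pi prime_ge_2_nat[OF p] by linarith
    then have "trs (LN \<alpha> d (p ^ i)) a (p ^ i) = 0"
      using euler_vanish[OF a1 summ bnd K prod] by blast
    then show ?thesis unfolding key[OF pi, symmetric] using False by simp
  qed
qed

lemma bounded_ap:
  assumes S: "S_poly a" and R: "ramanujan a"
  shows "\<exists>D. \<forall>p. prime p \<longrightarrow> norm (a p) \<le> D"
proof -
  from S obtain d :: nat and \<alpha> :: "nat \<Rightarrow> nat \<Rightarrow> complex" and \<theta> :: real and c where
    a1: "a 1 = 1" and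
    summC: "\<And>s. 1 < Re s \<Longrightarrow> summable (\<lambda>n. norm (a (Suc n) / of_nat (Suc n) powr s))" and
    bndc: "\<And>p j. prime p \<and> j < d \<Longrightarrow> norm (\<alpha> p j) \<le> c * real p powr \<theta>" and
    prodC: "\<And>s. 1 < Re s \<Longrightarrow> (\<lambda>n. if prime n then (\<Prod>j<d. inverse (1 - \<alpha> n j / of_nat n powr s)) else 1) has_prod dser a s"
    unfolding S_poly_def by blast
  define K where "K = max c 1"
  have K: "K > 0" by (simp add: K_def)
  have bnd: "norm (\<alpha> p j) \<le> K * real p powr \<theta>" if "prime p" "j < d" for p j
  proof -
    have "c * real p powr \<theta> \<le> K * real p powr \<theta>" by (intro mult_right_mono) (auto simp: K_def)
    then show ?thesis using bndc[of p j] that by linarith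
  qed
  have sumn: "summable (\<lambda>n. norm (a n / of_real (real n powr s)))" if s: "s > 1" for s
  proof -
    have "summable (\<lambda>n. norm (a (Suc n) / of_nat (Suc n) powr (of_real s)))" using summC[of "of_real s"] s by simp
    then have "summable (\<lambda>n. norm (a (Suc n) / of_real (real (Suc n) powr s)))"
      by (simp only: cpowr_nat_real)
    then show ?thesis by (subst summable_Suc_iff[symmetric])
  qed
  have summ: "AS a s" if s: "s > 1" for s
    unfolding AS_def by (rule norm_summable_imp_summable_on[OF sumn[OF s]])
  have DSeq: "DS a s = dser a (of_real s)" if s: "s > 1" for s
  proof -
    have "((\<lambda>n. a n / of_real (real n powr s)) has_sum DS a s) UNIV"
      using summ[OF s] unfolding AS_def DS_def by (simp add: has_sum_infsum)
    then have 1: "(\<lambda>n. a n / of_real (real n powr s)) sums DS a s" by (rule has_sum_imp_sums)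
    have "summable (\<lambda>n. a n / of_real (real n powr s))" by (rule summable_norm_cancel[OF sumn[OF s]])
    then have "summable (\<lambda>n. a (Suc n) / of_real (real (Suc n) powr s))" by (subst summable_Suc_iff)
    then have "(\<lambda>n. a (Suc n) / of_real (real (Suc n) powr s)) sums dser a (of_real s)"
      unfolding dser_def cpowr_nat_real by (simp add: summable_sums)
    then have "(\<lambda>n. a n / of_real (real n powr s)) sums dser a (of_real s)"
      by (subst (asm) sums_Suc_iff) simp
    then show ?thesis using 1 sums_unique2 by blast
  qed
  have prod: "(\<lambda>n. if prime n then \<Prod>j<d. inverse (1 - \<alpha> n j / of_real (real n powr s)) else 1) has_prod DS a s"
    if s: "s > 1" for s
    using prodC[of "of_real s"] s DSeq[OF s] unfolding cpowr_nat_real by simp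
  have "norm (a p) \<le> real d" if p: "prime p" for p
  proof -
    define A where "A = Abs_fps (\<lambda>k. a (p ^ k))"
    define P where "P = (\<Prod>j<d. 1 - fps_const (\<alpha> p j) * fps_X)"
    have AP: "A * P = 1" unfolding A_def P_def by (rule fps_AP_one[OF a1 summ bnd K prod p])
    have Pinfo: "fps_conv_radius P = \<infinity>" "\<And>z. eval_fps P z = (\<Prod>j<d. 1 - \<alpha> p j * z)"
       "fps_nth P 0 = 1" "fps_nth P 1 = - (\<Sum>j<d. \<alpha> p j)"
      using Pfps[where b="\<alpha> p" and d=d] unfolding P_def by auto
    have "fps_nth (A * P) 1 = 0" using AP by simp
    moreover have "fps_nth (A * P) 1 = fps_nth A 0 * fps_nth P 1 + fps_nth A 1 * fps_nth P 0"
      by (simp add: fps_mult_nth)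
    ultimately have ap: "a p = (\<Sum>j<d. \<alpha> p j)" using Pinfo a1 by (simp add: A_def)
    have small: "norm (\<alpha> p j) \<le> 1" if j: "j < d" for j
    proof (rule ccontr)
      assume "\<not> norm (\<alpha> p j) \<le> 1"
      then have big: "norm (\<alpha> p j) > 1" by simp
      define L where "L = ln (norm (\<alpha> p j))"
      have L0: "L > 0" using big unfolding L_def by (intro ln_gt_zero) auto
      have lp: "ln (real p) > 0" using prime_gt_1_nat[OF p] by simp
      define \<epsilon> where "\<epsilon> = L / (4 * ln (real p))"
      have e0: "\<epsilon> > 0" using L0 lp by (simp add: \<epsilon>_def)
      from R e0 obtain C where C: "\<And>n. n \<ge> 1 \<Longrightarrow> norm (a n) \<le> C * real n powr \<epsilon>"
        unfolding ramanujan_def by blast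
      have pe: "real p powr \<epsilon> = exp (L / 4)"
        using lp prime_gt_0_nat[OF p] by (simp add: powr_def \<epsilon>_def)
      define w :: complex where "w = of_real (exp (- L / 2))"
      have Ak: "norm (fps_nth A k * w ^ k) \<le> C * exp (- L / 4) ^ k" for k
      proof -
        have pk: "p ^ k \<ge> 1" using prime_gt_0_nat[OF p] by simp
        have pp: "real p > 0" using prime_gt_0_nat[OF p] by simp
        have "real (p ^ k) = real p powr real k" using powr_realpow[OF pp, of k] by simp
        then have "real (p ^ k) powr \<epsilon> = real p powr (real k * \<epsilon>)" by (simp add: powr_powr)
        also have "\<dots> = (real p powr \<epsilon>) ^ k" using powr_power[of "real p" \<epsilon> k] pp by simp
        finally have "real (p ^ k) powr \<epsilon> = (real p powr \<epsilon>) ^ k" .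
        also have "\<dots> = exp (L / 4) ^ k" by (simp add: pe)
        finally have 1: "real (p ^ k) powr \<epsilon> = exp (L / 4) ^ k" .
        have "norm (fps_nth A k * w ^ k) = norm (a (p ^ k)) * exp (- L / 2) ^ k"
          by (simp add: A_def w_def norm_mult norm_power)
        also have "\<dots> \<le> C * exp (L / 4) ^ k * exp (- L / 2) ^ k"
          using C[OF pk] 1 by (intro mult_right_mono) auto
        also have "\<dots> = C * (exp (L / 4) * exp (- L / 2)) ^ k" by (simp add: power_mult_distrib)
        also have "exp (L / 4) * exp (- L / 2) = exp (- L / 4)" by (simp add: exp_add[symmetric])
        finally show ?thesis .
      qed
      have "summable (\<lambda>k. fps_nth A k * w ^ k)"
        by (rule summable_comparison_test[OF _ summable_mult[OF summable_geometric]])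
           (use Ak L0 in auto)
      then have rA: "fps_conv_radius A \<ge> norm w"
        unfolding fps_conv_radius_def by (rule conv_radius_geI)
      define z :: complex where "z = 1 / \<alpha> p j"
      have az: "\<alpha> p j \<noteq> 0" using big by auto
      have "norm z = exp (- L)" using az by (simp add: z_def L_def norm_divide exp_minus divide_inverse norm_inverse)
      also have "exp (- L) < exp (- L / 2)" using L0 by simp
      also have "exp (- L / 2) = norm w" by (simp add: w_def)
      finally have zw: "norm z < norm w" .
      have zr: "ereal (norm z) < fps_conv_radius A" 
      proof -
        have "ereal (norm z) < ereal (norm w)" using zw by simp
        then show ?thesis using rA by (rule less_le_trans)
      qed
      have "eval_fps (A * P) z = eval_fps A z * eval_fps P z"
        by (rule eval_fps_mult) (use zr Pinfo in auto)
      also have "eval_fps P z = (\<Prod>j<d. 1 - \<alpha> p j * z)" by (rule Pinfo(2))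
      also have "\<dots> = 0"
      proof (rule prod_zero)
        have "1 - \<alpha> p j * z = 0" using az by (simp add: z_def)
        then show "\<exists>i\<in>{..<d}. 1 - \<alpha> p i * z = 0" using j by blast
      qed simp
      finally show False using AP by simp
    qed
    have "norm (a p) \<le> (\<Sum>j<d. norm (\<alpha> p j))" unfolding ap by (rule norm_sum)
    also have "\<dots> \<le> (\<Sum>j<d. 1)" by (intro sum_mono small) auto
    finally show ?thesis by simp
  qed
  then show ?thesis by blast
qed

lemma abel_sum:
  fixes v g :: "nat \<Rightarrow> real"
  shows "(\<Sum>k\<le>N. v k * g k) = (\<Sum>i\<le>N. v i) * g N + (\<Sum>k<N. (\<Sum>i\<le>k. v i) * (g k - g (Suc k)))"
  by (induction N) (simp_all add: algebra_simps)

lemma lnln_step: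
  fixes m :: real
  assumes m: "m \<ge> 2"
  shows "ln (ln (m + 1)) - ln (ln m) \<le> 1 / (m * ln m)"
proof -
  have lm: "ln m > 0" using m by simp
  have lm1: "ln (m + 1) > 0" using m by simp
  have "ln (ln (m + 1)) - ln (ln m) = ln (ln (m + 1) / ln m)" using lm lm1 by (simp add: ln_div)
  also have "\<dots> \<le> ln (m + 1) / ln m - 1" using lm lm1 by (intro ln_le_minus_one) simp
  also have "\<dots> = (ln (m + 1) - ln m) / ln m" using lm by (simp add: field_simps)
  also have "ln (m + 1) - ln m = ln (1 + 1 / m)"
  proof -
    have "1 + 1 / m = (m + 1) / m" using m by (simp add: field_simps)
    then show ?thesis using m by (simp add: ln_div)
  qed
  also have "ln (1 + 1 / m) \<le> 1 / m" using m by (intro ln_add_one_self_le_self) simp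
  then have "ln (1 + 1 / m) / ln m \<le> (1 / m) / ln m" using lm by (intro divide_right_mono) auto
  finally show ?thesis by simp
qed

lemma dg_nonneg:
  assumes "k \<ge> 1" "\<sigma> \<ge> 0"
  shows "1 / real k powr \<sigma> - 1 / real (Suc k) powr \<sigma> \<ge> 0"
proof -
  have "real k powr \<sigma> \<le> real (Suc k) powr \<sigma>" using assms by (intro powr_mono2) auto
  moreover have "real k powr \<sigma> > 0" using assms by simp
  ultimately show ?thesis by (simp add: frac_le)
qed

lemma lower_lt1:
  fixes v :: "nat \<Rightarrow> real"
  assumes \<sigma>: "0 < \<sigma>" and K1: "K1 \<ge> 2" and c: "c > 0"
    and V: "\<And>k. k \<ge> K1 \<Longrightarrow> (\<Sum>i\<le>k. v i) \<ge> c * real k / ln (real k)"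
  shows "\<exists>A. \<forall>N\<ge>K1. (\<Sum>k\<le>N. v k / real k powr \<sigma>) \<ge> c * real N powr (1 - \<sigma>) / ln (real N) - A"
proof -
  define g where "g k = 1 / real k powr \<sigma>" for k
  define A where "A = (\<Sum>k<K1. \<bar>(\<Sum>i\<le>k. v i) * (g k - g (Suc k))\<bar>)"
  have "(\<Sum>k\<le>N. v k / real k powr \<sigma>) \<ge> c * real N powr (1 - \<sigma>) / ln (real N) - A" if N: "N \<ge> K1" for N
  proof -
    have eq: "(\<Sum>k\<le>N. v k / real k powr \<sigma>) = (\<Sum>i\<le>N. v i) * g N + (\<Sum>k<N. (\<Sum>i\<le>k. v i) * (g k - g (Suc k)))"
      using abel_sum[of v g N] by (simp add: g_def)
    have split: "{..<N} = {..<K1} \<union> {K1..<N}" using N by auto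
    have "(\<Sum>k<N. (\<Sum>i\<le>k. v i) * (g k - g (Suc k))) = (\<Sum>k<K1. (\<Sum>i\<le>k. v i) * (g k - g (Suc k))) + (\<Sum>k\<in>{K1..<N}. (\<Sum>i\<le>k. v i) * (g k - g (Suc k)))"
      unfolding split by (rule sum.union_disjoint) auto
    moreover have "(\<Sum>k<K1. (\<Sum>i\<le>k. v i) * (g k - g (Suc k))) \<ge> - A"
      unfolding A_def by (rule order_trans[OF _ sum_mono[of _ "\<lambda>k. - \<bar>(\<Sum>i\<le>k. v i) * (g k - g (Suc k))\<bar>"]]) (auto simp: sum_negf)
    moreover have "(\<Sum>k\<in>{K1..<N}. (\<Sum>i\<le>k. v i) * (g k - g (Suc k))) \<ge> 0"
    proof (rule sum_nonneg)
      fix k assume k: "k \<in> {K1..<N}"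
      have "0 \<le> c * real k / ln (real k)" using c k K1 by simp
      also have "\<dots> \<le> (\<Sum>i\<le>k. v i)" using V k by simp
      finally show "0 \<le> (\<Sum>i\<le>k. v i) * (g k - g (Suc k))"
        using dg_nonneg[of k \<sigma>] k K1 \<sigma> by (simp add: g_def)
    qed
    moreover have "(\<Sum>i\<le>N. v i) * g N \<ge> c * real N powr (1 - \<sigma>) / ln (real N)"
    proof -
      have gN: "g N > 0" using N K1 by (simp add: g_def)
      have "c * real N / ln (real N) * g N \<le> (\<Sum>i\<le>N. v i) * g N"
        using V[OF N] gN by (intro mult_right_mono) auto
      moreover have "real N * g N = real N powr (1 - \<sigma>)"
        using N K1 by (simp add: g_def powr_diff)
      then have "c * real N / ln (real N) * g N = c * real N powr (1 - \<sigma>) / ln (real N)"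
        by (metis mult.commute mult.left_commute times_divide_eq_left)
      ultimately show ?thesis by linarith
    qed
    ultimately show ?thesis using eq by linarith
  qed
  then show ?thesis by blast
qed

lemma lower_eq1:
  fixes v :: "nat \<Rightarrow> real"
  assumes K1: "K1 \<ge> 2" and c: "c > 0"
    and V: "\<And>k. k \<ge> K1 \<Longrightarrow> (\<Sum>i\<le>k. v i) \<ge> c * real k / ln (real k)"
  shows "\<exists>A. \<forall>N\<ge>K1. (\<Sum>k\<le>N. v k / real k powr 1) \<ge> c * ln (ln (real N + 1)) - A"
proof -
  define g where "g k = 1 / real k powr 1" for k
  define \<Lambda> where "\<Lambda> k = ln (ln (real k + 1))" for k
  define A where "A = (\<Sum>k<K1. \<bar>(\<Sum>i\<le>k. v i) * (g k - g (Suc k))\<bar>) + c * \<Lambda> K1"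
  have "(\<Sum>k\<le>N. v k / real k powr 1) \<ge> c * ln (ln (real N + 1)) - A" if N: "N \<ge> K1" for N
  proof -
    have eq: "(\<Sum>k\<le>N. v k / real k powr 1) = (\<Sum>i\<le>N. v i) * g N + (\<Sum>k<N. (\<Sum>i\<le>k. v i) * (g k - g (Suc k)))"
      using abel_sum[of v g N] by (simp add: g_def)
    have split: "{..<N} = {..<K1} \<union> {K1..<N}" using N by auto
    have "(\<Sum>k<N. (\<Sum>i\<le>k. v i) * (g k - g (Suc k))) = (\<Sum>k<K1. (\<Sum>i\<le>k. v i) * (g k - g (Suc k))) + (\<Sum>k\<in>{K1..<N}. (\<Sum>i\<le>k. v i) * (g k - g (Suc k)))"
      unfolding split by (rule sum.union_disjoint) auto
    moreover have "(\<Sum>k<K1. (\<Sum>i\<le>k. v i) * (g k - g (Suc k))) \<ge> - (\<Sum>k<K1. \<bar>(\<Sum>i\<le>k. v i) * (g k - g (Suc k))\<bar>)"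
      by (rule order_trans[OF _ sum_mono[of _ "\<lambda>k. - \<bar>(\<Sum>i\<le>k. v i) * (g k - g (Suc k))\<bar>"]]) (auto simp: sum_negf)
    moreover have "(\<Sum>k\<in>{K1..<N}. (\<Sum>i\<le>k. v i) * (g k - g (Suc k))) \<ge> (\<Sum>k\<in>{K1..<N}. c * (\<Lambda> (Suc k) - \<Lambda> k))"
    proof (rule sum_mono)
      fix k assume k: "k \<in> {K1..<N}"
      have k2: "real k \<ge> 2" using k K1 by auto
      have lk: "ln (real k) > 0" using k2 by simp
      have lk1: "ln (real k + 1) > 0" using k2 by simp
      have dg: "g k - g (Suc k) = 1 / (real k * (real k + 1))" using k2 by (simp add: g_def field_simps)
      have "c * (\<Lambda> (Suc k) - \<Lambda> k) \<le> c * (1 / ((real k + 1) * ln (real k + 1)))"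
        using lnln_step[of "real k + 1"] k2 c by (intro mult_left_mono) (auto simp: \<Lambda>_def add.commute)
      also have "1 / ((real k + 1) * ln (real k + 1)) \<le> 1 / ((real k + 1) * ln (real k))"
        using lk lk1 k2 by (intro divide_left_mono mult_left_mono mult_pos_pos) auto
      also have "c * (1 / ((real k + 1) * ln (real k))) = c * real k / ln (real k) * (g k - g (Suc k))"
      proof -
        have p1: "(real k + 1) * ln (real k) > 0" using lk k2 by simp
        have p2: "real k * (real k + 1) > 0" using k2 by simp
        have "c * real k / ln (real k) * (1 / (real k * (real k + 1))) = c * (real k / (real k * ((real k + 1) * ln (real k))))"
          by (simp add: field_simps)
        also have "real k / (real k * ((real k + 1) * ln (real k))) = 1 / ((real k + 1) * ln (real k))"
          using k2 by simp
        finally show ?thesis by (simp add: dg)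
      qed
      also have "\<dots> \<le> (\<Sum>i\<le>k. v i) * (g k - g (Suc k))"
        using V[of k] k dg k2 by (intro mult_right_mono) auto
      finally show "c * (\<Lambda> (Suc k) - \<Lambda> k) \<le> (\<Sum>i\<le>k. v i) * (g k - g (Suc k))" using c by simp
    qed
    moreover have "(\<Sum>k\<in>{K1..<N}. c * (\<Lambda> (Suc k) - \<Lambda> k)) = c * (\<Lambda> N - \<Lambda> K1)"
      using sum_Suc_diff'[OF N, of \<Lambda>] by (simp add: sum_distrib_left[symmetric])
    moreover have "(\<Sum>i\<le>N. v i) * g N \<ge> 0"
    proof -
      have "0 \<le> c * real N / ln (real N)" using c N K1 by simp
      also have "\<dots> \<le> (\<Sum>i\<le>N. v i)" using V[OF N] by simp
      finally show ?thesis by (simp add: g_def)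
    qed
    ultimately show ?thesis using eq unfolding A_def \<Lambda>_def by (simp add: algebra_simps)
  qed
  then show ?thesis by blast
qed

lemma primes_le_finite: "finite {p::nat. prime p \<and> real p \<le> x}"
  by (rule finite_subset[of _ "{..nat \<lfloor>x\<rfloor>}"]) (auto simp: le_nat_floor)

lemma ev_lower:
  fixes v :: "nat \<Rightarrow> real"
  assumes lim: "((\<lambda>x::real. ln x / x * (\<Sum>p | prime p \<and> real p \<le> x. v p)) \<longlongrightarrow> \<kappa>) at_top" and \<kappa>: "\<kappa> > 0"
  shows "\<exists>K1\<ge>2. \<forall>k\<ge>K1. (\<Sum>i\<le>k. (if prime i then v i else 0)) \<ge> (\<kappa>/2) * real k / ln (real k)"
proof -
  have "((\<lambda>k. ln (real k) / real k * (\<Sum>p | prime p \<and> real p \<le> real k. v p)) \<longlongrightarrow> \<kappa>) sequentially"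
    by (rule filterlim_compose[OF lim filterlim_real_sequentially])
  then have "\<forall>\<^sub>F k in sequentially. ln (real k) / real k * (\<Sum>p | prime p \<and> real p \<le> real k. v p) > \<kappa>/2"
    using \<kappa> by (intro order_tendstoD(1)) auto
  then obtain K0 where K0: "\<And>k. k \<ge> K0 \<Longrightarrow> ln (real k) / real k * (\<Sum>p | prime p \<and> real p \<le> real k. v p) > \<kappa>/2"
    by (auto simp: eventually_sequentially)
  have "(\<Sum>i\<le>k. (if prime i then v i else 0)) \<ge> (\<kappa>/2) * real k / ln (real k)" if k: "k \<ge> max K0 2" for k
  proof -
    have k2: "real k \<ge> 2" using k by auto
    have lk: "ln (real k) > 0" using k2 by simp
    have "{p. prime p \<and> real p \<le> real k} = {i\<in>{..k}. prime i}" by auto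
    then have eq: "(\<Sum>p | prime p \<and> real p \<le> real k. v p) = (\<Sum>i\<le>k. (if prime i then v i else 0))"
      using sum.inter_filter[of "{..k}" v prime] by simp
    have "ln (real k) / real k * (\<Sum>i\<le>k. (if prime i then v i else 0)) > \<kappa>/2" using K0[of k] k eq by simp
    then have "(\<Sum>i\<le>k. (if prime i then v i else 0)) > (\<kappa>/2) / (ln (real k) / real k)"
      using lk k2 by (simp add: field_simps)
    then show ?thesis by (simp add: field_simps)
  qed
  then show ?thesis by (intro exI[of _ "max K0 2"]) auto
qed

lemma cutoff_lim:
  fixes u :: "nat \<Rightarrow> real"
  assumes lim: "((\<lambda>x::real. ln x / x * (\<Sum>p | prime p \<and> real p \<le> x. u p)) \<longlongrightarrow> \<kappa>) at_top"
  shows "((\<lambda>x::real. ln x / x * (\<Sum>p | prime p \<and> real p \<le> x. if xe \<le> real p then u p else 0)) \<longlongrightarrow> \<kappa>) at_top"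
proof -
  define K where "K = nat \<lceil>xe\<rceil>"
  define Cx where "Cx = (\<Sum>p\<le>K. \<bar>u p\<bar>)"
  define S where "S x = {p. prime p \<and> real p \<le> x}" for x :: real
  have fin: "finite (S x)" for x unfolding S_def by (rule primes_le_finite)
  have split: "(\<Sum>p\<in>S x. if xe \<le> real p then u p else 0) = (\<Sum>p\<in>S x. u p) - (\<Sum>p\<in>S x. if xe \<le> real p then 0 else u p)" for x
    by (subst sum_subtractf[symmetric]) (auto intro!: sum.cong)
  have bnd: "\<bar>\<Sum>p\<in>S x. if xe \<le> real p then 0 else u p\<bar> \<le> Cx" for x
  proof -
    have "\<bar>\<Sum>p\<in>S x. if xe \<le> real p then 0 else u p\<bar> \<le> (\<Sum>p\<in>S x. if xe \<le> real p then 0 else \<bar>u p\<bar>)"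
      by (rule order_trans[OF sum_abs], rule sum_mono) auto
    also have "\<dots> = (\<Sum>p\<in>S x \<inter> {..K}. if xe \<le> real p then 0 else \<bar>u p\<bar>)"
    proof (rule sum.mono_neutral_right[OF fin])
      show "\<forall>i\<in>S x - S x \<inter> {..K}. (if xe \<le> real i then 0 else \<bar>u i\<bar>) = 0"
      proof
        fix i assume "i \<in> S x - S x \<inter> {..K}"
        then have "i > K" by auto
        then have "real i \<ge> xe" unfolding K_def by linarith
        then show "(if xe \<le> real i then 0 else \<bar>u i\<bar>) = 0" by simp
      qed
    qed auto
    also have "\<dots> \<le> (\<Sum>p\<le>K. if xe \<le> real p then 0 else \<bar>u p\<bar>)"
      by (rule sum_mono2) auto
    also have "\<dots> \<le> Cx" unfolding Cx_def by (intro sum_mono) auto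
    finally show ?thesis .
  qed
  have z: "((\<lambda>x::real. ln x / x * (\<Sum>p\<in>S x. if xe \<le> real p then 0 else u p)) \<longlongrightarrow> 0) at_top"
  proof (rule Lim_null_comparison)
    show "\<forall>\<^sub>F x in at_top. norm (ln x / x * (\<Sum>p\<in>S x. if xe \<le> real p then 0 else u p)) \<le> ln x / x * Cx"
      using eventually_ge_at_top[of "1::real"]
    proof eventually_elim
      case (elim x)
      have l0: "ln x / x \<ge> 0" using elim by simp
      have "norm (ln x / x * (\<Sum>p\<in>S x. if xe \<le> real p then 0 else u p)) = ln x / x * \<bar>\<Sum>p\<in>S x. if xe \<le> real p then 0 else u p\<bar>"
        unfolding real_norm_def abs_mult using abs_of_nonneg[OF l0] by simp
      also have "\<dots> \<le> ln x / x * Cx" using bnd[of x] l0 by (rule mult_left_mono)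
      finally show ?case .
    qed
    have l: "((\<lambda>x::real. ln x / x) \<longlongrightarrow> 0) at_top" by real_asymp
    show "((\<lambda>x::real. ln x / x * Cx) \<longlongrightarrow> 0) at_top"
      using tendsto_mult[OF l tendsto_const[of Cx]] by simp
  qed
  have "((\<lambda>x::real. ln x / x * (\<Sum>p\<in>S x. u p) - ln x / x * (\<Sum>p\<in>S x. if xe \<le> real p then 0 else u p)) \<longlongrightarrow> \<kappa> - 0) at_top"
    by (intro tendsto_diff z) (use lim in \<open>simp add: S_def\<close>)
  then show ?thesis unfolding S_def[symmetric] by (simp add: split right_diff_distrib)
qed

lemma pointwise:
  fixes Rv x :: complex and s C P E :: real
  assumes s: "s = 1 \<or> s = -1" and C: "C > 0" and P: "P > 0"
    and Qb: "\<bar>Re (cnj Rv * (of_real s * x))\<bar> * (norm Rv ^ 2 / C^2) \<le> E"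
  shows "s * (Re (cnj (Rv / of_real C) * x) / ((1 + (norm (Rv / of_real C))\<^sup>2) * P)) \<ge> (Re (cnj Rv * (of_real s * x)) - E) / (C * P)"
proof -
  define Q where "Q = Re (cnj Rv * (of_real s * x))"
  define t where "t = norm Rv ^ 2 / C^2"
  have t0: "t \<ge> 0" by (simp add: t_def)
  have nt: "(norm (Rv / of_real C))\<^sup>2 = t" using C by (simp add: t_def norm_divide power_divide)
  have sQ: "s * Re (cnj (Rv / of_real C) * x) = Q / C"
    using C by (simp add: Q_def complex_cnj_divide Re_divide_of_real algebra_simps)
  have key: "Q / (1 + t) \<ge> Q - E"
  proof -
    have "Q - Q / (1 + t) = Q * t / (1 + t)" using t0 by (simp add: field_simps)
    also have "\<dots> \<le> \<bar>Q\<bar> * t / (1 + t)" using t0 by (intro divide_right_mono mult_right_mono) auto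
    also have "\<dots> \<le> \<bar>Q\<bar> * t / 1" using t0 by (intro divide_left_mono) auto
    also have "\<dots> = \<bar>Q\<bar> * t" by simp
    also have "\<dots> \<le> E" using Qb by (simp add: Q_def t_def)
    finally show ?thesis by simp
  qed
  have "s * (Re (cnj (Rv / of_real C) * x) / ((1 + (norm (Rv / of_real C))\<^sup>2) * P)) = (Q / (1 + t)) / (C * P)"
    using sQ nt C P t0 by (simp add: field_simps)
  also have "\<dots> \<ge> (Q - E) / (C * P)" using key C P by (intro divide_right_mono) auto
  finally show ?thesis by (simp add: Q_def)
qed

lemma rcoef_eq:
  "rcoef a H G C xe \<beta> T p = (if prime p \<and> xe \<le> real p \<and> real p \<le> \<beta> * ln T
     then (\<Sum>g\<in>{1..H+G}. of_real (if g \<le> H then 1 else -1) * a g p) / of_real C else 0)"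
proof -
  have U: "{1..H+G} = {1..H} \<union> {H<..H+G}" by auto
  have "(\<Sum>g\<in>{1..H+G}. of_real (if g \<le> H then 1 else -1) * a g p) =
        (\<Sum>g\<in>{1..H}. of_real (if g \<le> H then 1 else -1) * a g p) + (\<Sum>g\<in>{H<..H+G}. of_real (if g \<le> H then 1 else -1) * a g p)"
    unfolding U by (rule sum.union_disjoint) auto
  also have "(\<Sum>g\<in>{1..H}. of_real (if g \<le> H then 1 else -1) * a g p) = (\<Sum>g\<in>{1..H}. a g p)"
    by (intro sum.cong) auto
  also have "(\<Sum>g\<in>{H<..H+G}. of_real (if g \<le> H then 1 else -1) * a g p) = - (\<Sum>g\<in>{H<..H+G}. a g p)"
    by (simp add: sum_negf[symmetric])
  finally show ?thesis unfolding rcoef_def by simp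
qed

lemma asy1: "0 < \<sigma> \<Longrightarrow> \<sigma> < 1 \<Longrightarrow> \<beta> > 0 \<Longrightarrow> c > 0 \<Longrightarrow> \<forall>\<^sub>F T in at_top. c * ln T powr (1 - \<sigma>) / ln (\<beta> * ln T) - A \<ge> c / 4 * ln (T::real) powr (1 - \<sigma>) / ln (ln T)"
  by real_asymp

lemma asy2: "\<beta> > 0 \<Longrightarrow> c > 0 \<Longrightarrow> \<forall>\<^sub>F T in at_top. c * ln (ln (\<beta> * ln T)) - A \<ge> c / 4 * ln (ln (ln (T::real)))"
  by real_asymp

lemma asy3: "\<beta> > 0 \<Longrightarrow> \<forall>\<^sub>F T in at_top. \<beta> * ln (T::real) \<ge> K"
  by real_asymp

lemma per_h:
  fixes H G :: nat and a :: "nat \<Rightarrow> nat \<Rightarrow> complex" and \<kappa> :: "nat \<Rightarrow> nat \<Rightarrow> complex"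
    and \<beta> \<sigma> C D xe :: real and h :: nat
  assumes lim: "\<forall>h\<in>{1..H+G}. \<forall>g\<in>{1..H+G}.
              ((\<lambda>x::real. of_real (ln x / x) * (\<Sum>p | prime p \<and> real p \<le> x. a h p * cnj (a g p)))
                 \<longlongrightarrow> \<kappa> h g) at_top"
    and koff: "\<forall>h\<in>{1..H+G}. \<forall>g\<in>{1..H+G}. h \<noteq> g \<longrightarrow> \<kappa> h g = 0"
    and h: "h \<in> {1..H+G}" and kh: "Re (\<kappa> h h) > 0"
    and Db: "\<forall>g\<in>{1..H+G}. \<forall>p. prime p \<longrightarrow> norm (a g p) \<le> D" and D0: "D \<ge> 0"
    and C: "C > 0"
    and keyC: "real (H+G)^2 * D^2 / C^2 * (\<Sum>g\<in>{1..H+G}. Re (\<kappa> g g)) \<le> Re (\<kappa> h h) / 2"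
    and \<beta>: "0 < \<beta>" and \<sigma>: "0 < \<sigma>" "\<sigma> \<le> 1"
  shows "\<exists>B>0. \<forall>\<^sub>F T in at_top. (-1::real) ^ (if h \<le> H then 1 else 0) *
                  (\<Sum>p | prime p \<and> real p \<le> \<beta> * ln T.
                     Re (cnj (rcoef a H G C xe \<beta> T p) * a h p) /
                     ((1 + (norm (rcoef a H G C xe \<beta> T p))\<^sup>2) * real p powr \<sigma>))
                  \<le> (if \<sigma> < 1 then - B * ln T powr (1 - \<sigma>) / ln (ln T)
                     else - B * ln (ln (ln T)))"
proof -
  define I where "I = {1..H+G}"
  define M where "M = real (H+G)"
  have cardI: "card I = H + G" by (simp add: I_def)
  define sg where "sg g = (if g \<le> H then 1 else -1 :: real)" for g
  have sg2: "sg g * sg g = 1" for g by (simp add: sg_def)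
  have absg: "\<bar>sg g\<bar> = 1" for g by (simp add: sg_def)
  have sg2c: "complex_of_real (sg g) * complex_of_real (sg g) = 1" for g by (simp add: sg_def)
  define R where "R p = (\<Sum>g\<in>I. of_real (sg g) * a g p)" for p
  define lam where "lam = M^2 * D^2 / C^2"
  define ktot where "ktot = (\<Sum>g\<in>I. Re (\<kappa> g g))"
  define k' where "k' = Re (\<kappa> h h) - lam * ktot"
  have lk: "lam * ktot \<le> Re (\<kappa> h h) / 2" using keyC unfolding lam_def ktot_def M_def I_def .
  have k'pos: "k' > 0" using lk kh unfolding k'_def by linarith
  have k'ge: "k' \<ge> Re (\<kappa> h h) / 2" using lk unfolding k'_def by linarith
  define \<Phi> where "\<Phi> p = (\<Sum>g\<in>I. of_real (sg g * sg h) * (a h p * cnj (a g p))) - of_real lam * (\<Sum>g\<in>I. a g p * cnj (a g p))" for p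
  define v where "v p = (if xe \<le> real p then Re (\<Phi> p) else 0)" for p
  have hI: "h \<in> I" using h by (simp add: I_def)
  define S where "S f x = (\<Sum>p | prime p \<and> real p \<le> x. f p)" for f :: "nat \<Rightarrow> complex" and x :: real
  have L1: "((\<lambda>x::real. of_real (ln x / x) * S (\<lambda>p. a h p * cnj (a g p)) x) \<longlongrightarrow> \<kappa> h g) at_top" if "g \<in> I" for g
    using lim hI that unfolding I_def S_def by blast
  have L2: "((\<lambda>x::real. of_real (ln x / x) * S (\<lambda>p. a g p * cnj (a g p)) x) \<longlongrightarrow> \<kappa> g g) at_top" if "g \<in> I" for g
    using lim that unfolding I_def S_def by blast
  have Feq: "of_real (ln x / x) * S \<Phi> x =
      (\<Sum>g\<in>I. of_real (sg g * sg h) * (of_real (ln x / x) * S (\<lambda>p. a h p * cnj (a g p)) x)) -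
      of_real lam * (\<Sum>g\<in>I. of_real (ln x / x) * S (\<lambda>p. a g p * cnj (a g p)) x)" for x
    unfolding S_def \<Phi>_def
    by (simp add: sum_subtractf sum_distrib_left sum.swap[of _ I] algebra_simps)
  have LF: "((\<lambda>x::real. of_real (ln x / x) * S \<Phi> x) \<longlongrightarrow>
      (\<Sum>g\<in>I. of_real (sg g * sg h) * \<kappa> h g) - of_real lam * (\<Sum>g\<in>I. \<kappa> g g)) at_top"
    unfolding Feq by (intro tendsto_diff tendsto_mult tendsto_const tendsto_sum L1 L2)
  have limval: "Re ((\<Sum>g\<in>I. of_real (sg g * sg h) * \<kappa> h g) - of_real lam * (\<Sum>g\<in>I. \<kappa> g g)) = k'"
  proof -
    have "(\<Sum>g\<in>I. of_real (sg g * sg h) * \<kappa> h g) = (\<Sum>g\<in>I. if g = h then \<kappa> h h else 0)"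
    proof (rule sum.cong)
      fix g assume g: "g \<in> I"
      show "of_real (sg g * sg h) * \<kappa> h g = (if g = h then \<kappa> h h else 0)"
        using koff hI g sg2c[of h] unfolding I_def by auto
    qed simp
    also have "\<dots> = \<kappa> h h" using hI by (simp add: I_def)
    finally show ?thesis by (simp add: k'_def ktot_def)
  qed
  have LRe: "((\<lambda>x::real. ln x / x * (\<Sum>p | prime p \<and> real p \<le> x. Re (\<Phi> p))) \<longlongrightarrow> k') at_top"
  proof -
    have "((\<lambda>x::real. Re (of_real (ln x / x) * S \<Phi> x)) \<longlongrightarrow> k') at_top"
      using tendsto_Re[OF LF] limval by simp
    moreover have "(\<lambda>x. Re (of_real (ln x / x) * S \<Phi> x)) = (\<lambda>x. ln x / x * (\<Sum>p | prime p \<and> real p \<le> x. Re (\<Phi> p)))"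
    proof
      fix x :: real
      have 1: "Re (S \<Phi> x) = (\<Sum>p | prime p \<and> real p \<le> x. Re (\<Phi> p))" by (simp add: S_def Re_sum)
      have "Re (of_real (ln x / x) * S \<Phi> x) = ln x / x * Re (S \<Phi> x)" by simp
      then show "Re (of_real (ln x / x) * S \<Phi> x) = ln x / x * (\<Sum>p | prime p \<and> real p \<le> x. Re (\<Phi> p))"
        unfolding 1 .
    qed
    ultimately show ?thesis by simp
  qed
  have Lv: "((\<lambda>x::real. ln x / x * (\<Sum>p | prime p \<and> real p \<le> x. v p)) \<longlongrightarrow> k') at_top"
    unfolding v_def by (rule cutoff_lim[OF LRe])
  obtain K1 where K1: "K1 \<ge> 2" and V: "\<And>k. k \<ge> K1 \<Longrightarrow> (\<Sum>i\<le>k. (if prime i then v i else 0)) \<ge> (k'/2) * real k / ln (real k)"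
    using ev_lower[OF Lv k'pos] by blast
  define trm where "trm T p = Re (cnj (rcoef a H G C xe \<beta> T p) * a h p) /
                     ((1 + (norm (rcoef a H G C xe \<beta> T p))\<^sup>2) * real p powr \<sigma>)" for T p
  have pw: "sg h * trm T p \<ge> v p / (C * real p powr \<sigma>)" if p: "prime p" "real p \<le> \<beta> * ln T" for T p
  proof (cases "xe \<le> real p")
    case False
    then have "rcoef a H G C xe \<beta> T p = 0" by (simp add: rcoef_eq)
    then show ?thesis using False by (simp add: trm_def v_def)
  next
    case True
    have rc: "rcoef a H G C xe \<beta> T p = R p / of_real C"
      using True p by (simp add: rcoef_eq R_def I_def sg_def)
    have Pp: "real p powr \<sigma> > 0" using prime_gt_0_nat[OF p(1)] by simp
    define E where "E = lam * (\<Sum>g\<in>I. (norm (a g p))\<^sup>2)"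
    have s: "sg h = 1 \<or> sg h = -1" by (simp add: sg_def)
    have na: "norm (a g p) \<le> D" if "g \<in> I" for g using Db that p unfolding I_def by blast
    have nR: "norm (R p) \<le> (\<Sum>g\<in>I. norm (a g p))"
      unfolding R_def by (rule order_trans[OF norm_sum]) (simp add: norm_mult absg)
    have nR1: "(\<Sum>g\<in>I. norm (a g p)) \<le> M * D"
      using sum_mono[of I "\<lambda>g. norm (a g p)" "\<lambda>g. D"] na cardI by (simp add: M_def)
    have nR2: "(norm (R p))\<^sup>2 \<le> (\<Sum>g\<in>I. (norm (a g p))\<^sup>2) * M"
    proof -
      have "(norm (R p))\<^sup>2 \<le> (\<Sum>g\<in>I. norm (a g p))\<^sup>2"
        using nR by (intro power_mono) auto
      also have "\<dots> \<le> (\<Sum>g\<in>I. (norm (a g p))\<^sup>2) * real (card I)"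
        by (rule sum_squared_le_sum_of_squares)
      finally show ?thesis by (simp add: cardI M_def)
    qed
    have Qb: "\<bar>Re (cnj (R p) * (of_real (sg h) * a h p))\<bar> * (norm (R p) ^ 2 / C^2) \<le> E"
    proof -
      have "\<bar>Re (cnj (R p) * (of_real (sg h) * a h p))\<bar> \<le> norm (cnj (R p) * (of_real (sg h) * a h p))"
        by (rule abs_Re_le_cmod)
      also have "\<dots> = norm (R p) * norm (a h p)" by (simp add: norm_mult absg)
      also have "\<dots> \<le> (M * D) * D" using nR nR1 na[OF hI] D0 by (intro mult_mono) (auto simp: M_def)
      finally have q: "\<bar>Re (cnj (R p) * (of_real (sg h) * a h p))\<bar> \<le> M * D * D" .
      have t: "norm (R p) ^ 2 / C^2 \<le> (\<Sum>g\<in>I. (norm (a g p))\<^sup>2) * M / C^2"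
        using nR2 by (intro divide_right_mono) auto
      have "\<bar>Re (cnj (R p) * (of_real (sg h) * a h p))\<bar> * (norm (R p) ^ 2 / C^2) \<le> (M * D * D) * ((\<Sum>g\<in>I. (norm (a g p))\<^sup>2) * M / C^2)"
        using q t by (intro mult_mono) (auto simp: M_def D0)
      also have "\<dots> = E" by (simp add: E_def lam_def power2_eq_square)
      finally show ?thesis .
    qed
    have Qeq: "Re (cnj (R p) * (of_real (sg h) * a h p)) - E = Re (\<Phi> p)"
    proof -
      have "cnj (R p) * (of_real (sg h) * a h p) = (\<Sum>g\<in>I. of_real (sg g * sg h) * (a h p * cnj (a g p)))"
        by (simp add: R_def sum_distrib_left sum_distrib_right algebra_simps)
      moreover have "Re (of_real lam * (\<Sum>g\<in>I. a g p * cnj (a g p))) = E"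
        by (simp add: E_def Re_sum complex_mult_cnj cmod_def)
      ultimately show ?thesis by (simp add: \<Phi>_def)
    qed
    have "sg h * trm T p \<ge> (Re (cnj (R p) * (of_real (sg h) * a h p)) - E) / (C * real p powr \<sigma>)"
      unfolding trm_def rc by (rule pointwise[OF s C Pp Qb])
    then show ?thesis using Qeq True by (simp add: v_def)
  qed
  define N where "N T = nat \<lfloor>\<beta> * ln T\<rfloor>" for T :: real
  define v' where "v' i = (if prime i then v i else 0)" for i
  have Pset: "{p. prime p \<and> real p \<le> \<beta> * ln T} = {i\<in>{..N T}. prime i}" for T
  proof (intro equalityI subsetI)
    fix p assume "p \<in> {p. prime p \<and> real p \<le> \<beta> * ln T}"
    then show "p \<in> {i\<in>{..N T}. prime i}" by (simp add: N_def le_nat_floor)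
  next
    fix p assume "p \<in> {i\<in>{..N T}. prime i}"
    then have p: "p \<le> N T" "prime p" by auto
    then have "p \<ge> 2" using prime_ge_2_nat by blast
    with p have "N T \<ge> 2" by simp
    then have "\<lfloor>\<beta> * ln T\<rfloor> \<ge> 2" unfolding N_def by linarith
    then have "real (N T) = \<lfloor>\<beta> * ln T\<rfloor>" unfolding N_def by simp
    then have "real (N T) \<le> \<beta> * ln T" by linarith
    moreover have "real p \<le> real (N T)" using p by simp
    ultimately show "p \<in> {p. prime p \<and> real p \<le> \<beta> * ln T}" using p by simp
  qed
  have sumlow: "sg h * (\<Sum>p | prime p \<and> real p \<le> \<beta> * ln T. trm T p) \<ge> (1 / C) * (\<Sum>k\<le>N T. v' k / real k powr \<sigma>)" for T
  proof -
    have "sg h * (\<Sum>p | prime p \<and> real p \<le> \<beta> * ln T. trm T p) = (\<Sum>p | prime p \<and> real p \<le> \<beta> * ln T. sg h * trm T p)"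
      by (simp add: sum_distrib_left)
    also have "\<dots> \<ge> (\<Sum>p | prime p \<and> real p \<le> \<beta> * ln T. v p / (C * real p powr \<sigma>))"
      by (intro sum_mono pw) auto
    also have "(\<Sum>p | prime p \<and> real p \<le> \<beta> * ln T. v p / (C * real p powr \<sigma>)) = (\<Sum>k\<le>N T. (if prime k then v k / (C * real k powr \<sigma>) else 0))"
      unfolding Pset by (rule sum.inter_filter) simp
    also have "\<dots> = (1 / C) * (\<Sum>k\<le>N T. v' k / real k powr \<sigma>)"
      by (simp add: sum_distrib_left v'_def) (intro sum.cong, auto)
    finally show ?thesis .
  qed
  have V': "\<And>k. k \<ge> K1 \<Longrightarrow> (\<Sum>i\<le>k. v' i) \<ge> (k'/2) * real k / ln (real k)"
    using V unfolding v'_def .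
  have k2: "k' / 2 > 0" using k'pos by simp
  have sgn: "(-1::real) ^ (if h \<le> H then 1 else 0) = - sg h" by (simp add: sg_def)
  have goalS: "(\<Sum>p | prime p \<and> real p \<le> \<beta> * ln T.
                     Re (cnj (rcoef a H G C xe \<beta> T p) * a h p) /
                     ((1 + (norm (rcoef a H G C xe \<beta> T p))\<^sup>2) * real p powr \<sigma>)) = (\<Sum>p | prime p \<and> real p \<le> \<beta> * ln T. trm T p)" for T
    by (simp add: trm_def)
  have evN: "\<forall>\<^sub>F T in at_top. \<beta> * ln T \<ge> 2 * real K1 + 6" using \<beta> by (intro asy3)
  have Nprops: "real (N T) \<le> \<beta> * ln T \<and> real (N T) \<ge> \<beta> * ln T - 1 \<and> N T \<ge> K1" if T: "\<beta> * ln T \<ge> 2 * real K1 + 6" for T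
  proof -
    have "real (N T) = \<lfloor>\<beta> * ln T\<rfloor>" unfolding N_def using T by simp
    then show ?thesis using T by linarith
  qed
  show ?thesis
  proof (cases "\<sigma> < 1")
    case True
    obtain A where A: "\<And>N. N \<ge> K1 \<Longrightarrow> (\<Sum>k\<le>N. v' k / real k powr \<sigma>) \<ge> (k'/2) * real N powr (1 - \<sigma>) / ln (real N) - A"
      using lower_lt1[OF \<sigma>(1) K1 k2 V'] by blast
    define c2 where "c2 = (k'/2) * (\<beta>/2) powr (1 - \<sigma>)"
    have c2: "c2 > 0" using k2 \<beta> by (simp add: c2_def)
    define B where "B = c2 / (4 * C)"
    have B: "B > 0" using c2 C by (simp add: B_def)
    have ev2: "\<forall>\<^sub>F T in at_top. c2 * ln T powr (1 - \<sigma>) / ln (\<beta> * ln T) - A \<ge> c2 / 4 * ln T powr (1 - \<sigma>) / ln (ln T)"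
      using \<sigma>(1) True \<beta> c2 by (rule asy1)
    have "\<forall>\<^sub>F T in at_top. (-1::real) ^ (if h \<le> H then 1 else 0) *
                  (\<Sum>p | prime p \<and> real p \<le> \<beta> * ln T. trm T p) \<le> - B * ln T powr (1 - \<sigma>) / ln (ln T)"
      using evN ev2
    proof eventually_elim
      case (elim T)
      define y where "y = \<beta> * ln T"
      have y: "y \<ge> 6" using elim(1) by (simp add: y_def)
      have lT: "ln T > 0"
      proof (rule ccontr)
        assume "\<not> ln T > 0"
        then have "\<beta> * ln T \<le> 0" using \<beta> by (simp add: mult_nonneg_nonpos)
        then show False using y by (simp add: y_def)
      qed
      have NP: "real (N T) \<le> y" "real (N T) \<ge> y - 1" "N T \<ge> K1" using Nprops[OF elim(1)] by (auto simp: y_def)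
      have Npos: "real (N T) > 0" using NP y by linarith
      have "(y/2) powr (1 - \<sigma>) \<le> real (N T) powr (1 - \<sigma>)"
        using NP y True by (intro powr_mono2) auto
      moreover have "(y/2) powr (1 - \<sigma>) = (\<beta>/2) powr (1 - \<sigma>) * ln T powr (1 - \<sigma>)"
        using \<beta> lT by (simp add: y_def powr_mult[symmetric])
      ultimately have n1: "(\<beta>/2) powr (1 - \<sigma>) * ln T powr (1 - \<sigma>) \<le> real (N T) powr (1 - \<sigma>)" by simp
      have lN: "ln (real (N T)) > 0" "ln (real (N T)) \<le> ln y" using NP y Npos by auto
      have "c2 * ln T powr (1 - \<sigma>) / ln y \<le> (k'/2) * real (N T) powr (1 - \<sigma>) / ln y"
        using n1 k2 lN by (intro divide_right_mono) (auto simp: c2_def mult.assoc intro: mult_left_mono)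
      also have "\<dots> \<le> (k'/2) * real (N T) powr (1 - \<sigma>) / ln (real (N T))"
        using lN k2 by (intro divide_left_mono) auto
      finally have n2: "c2 * ln T powr (1 - \<sigma>) / ln y \<le> (k'/2) * real (N T) powr (1 - \<sigma>) / ln (real (N T))" .
      have "c2 / 4 * ln T powr (1 - \<sigma>) / ln (ln T) \<le> (\<Sum>k\<le>N T. v' k / real k powr \<sigma>)"
        using elim(2) n2 A[OF NP(3)] unfolding y_def by linarith
      then have "B * ln T powr (1 - \<sigma>) / ln (ln T) \<le> (1 / C) * (\<Sum>k\<le>N T. v' k / real k powr \<sigma>)"
        using C by (simp add: B_def field_simps)
      also have "\<dots> \<le> sg h * (\<Sum>p | prime p \<and> real p \<le> \<beta> * ln T. trm T p)" by (rule sumlow)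
      finally show ?case unfolding sgn by simp
    qed
    then show ?thesis using B True unfolding goalS by auto
  next
    case False
    then have s1: "\<sigma> = 1" using \<sigma>(2) by simp
    obtain A where A: "\<And>N. N \<ge> K1 \<Longrightarrow> (\<Sum>k\<le>N. v' k / real k powr 1) \<ge> (k'/2) * ln (ln (real N + 1)) - A"
      using lower_eq1[OF K1 k2 V'] by blast
    define B where "B = (k'/2) / (4 * C)"
    have B: "B > 0" using k2 C by (simp add: B_def)
    have ev2: "\<forall>\<^sub>F T in at_top. (k'/2) * ln (ln (\<beta> * ln T)) - A \<ge> (k'/2) / 4 * ln (ln (ln T))"
      using \<beta> k2 by (rule asy2)
    have "\<forall>\<^sub>F T in at_top. (-1::real) ^ (if h \<le> H then 1 else 0) *
                  (\<Sum>p | prime p \<and> real p \<le> \<beta> * ln T. trm T p) \<le> - B * ln (ln (ln T))"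
      using evN ev2
    proof eventually_elim
      case (elim T)
      define y where "y = \<beta> * ln T"
      have y: "y \<ge> 6" using elim(1) by (simp add: y_def)
      have NP: "real (N T) \<le> y" "real (N T) \<ge> y - 1" "N T \<ge> K1" using Nprops[OF elim(1)] by (auto simp: y_def)
      have "ln y \<le> ln (real (N T) + 1)" using NP y by simp
      moreover have "ln y > 0" using y by simp
      moreover have "N T > 0" using NP y by linarith
      ultimately have "ln (ln y) \<le> ln (ln (real (N T) + 1))" by (subst ln_le_cancel_iff) auto
      then have "(k'/2) * ln (ln y) \<le> (k'/2) * ln (ln (real (N T) + 1))" using k2 by (intro mult_left_mono) auto
      then have "(k'/2) / 4 * ln (ln (ln T)) \<le> (\<Sum>k\<le>N T. v' k / real k powr \<sigma>)"
        using elim(2) A[OF NP(3)] unfolding y_def s1 by linarith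
      then have "B * ln (ln (ln T)) \<le> (1 / C) * (\<Sum>k\<le>N T. v' k / real k powr \<sigma>)"
        using C by (simp add: B_def field_simps)
      also have "\<dots> \<le> sg h * (\<Sum>p | prime p \<and> real p \<le> \<beta> * ln T. trm T p)" by (rule sumlow)
      finally show ?case unfolding sgn by simp
    qed
    then show ?thesis using B False unfolding goalS by auto
  qed
qed

theorem lemma9:
  fixes H G :: nat and a :: "nat \<Rightarrow> nat \<Rightarrow> complex" and \<kappa> :: "nat \<Rightarrow> nat \<Rightarrow> complex"
    and \<alpha> \<beta> \<sigma> :: real
  assumes Lh: "\<forall>h\<in>{1..H+G}. S_poly (a h) \<and> ramanujan (a h)"
    and lim: "\<forall>h\<in>{1..H+G}. \<forall>g\<in>{1..H+G}.
              ((\<lambda>x::real. of_real (ln x / x) * (\<Sum>p | prime p \<and> real p \<le> x. a h p * cnj (a g p)))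
                 \<longlongrightarrow> \<kappa> h g) at_top"
    and kdiag: "\<forall>h\<in>{1..H+G}. \<kappa> h h \<in> \<real> \<and> Re (\<kappa> h h) > 0"
    and koff: "\<forall>h\<in>{1..H+G}. \<forall>g\<in>{1..H+G}. h \<noteq> g \<longrightarrow> \<kappa> h g = 0"
    and "0 < \<alpha>" "\<alpha> < 1" "0 < \<beta>" "\<beta> < \<alpha> / 2"
    and "0 < \<sigma>" "\<sigma> \<le> 1"
  shows "\<exists>\<epsilon>0>0. \<forall>\<epsilon>. 0 < \<epsilon> \<and> \<epsilon> < \<epsilon>0 \<longrightarrow>
          (\<exists>C0. \<forall>C\<ge>C0. \<forall>xe::real.
            (\<forall>x\<ge>xe. \<forall>h\<in>{1..H+G}.
               \<bar>(\<Sum>p | prime p \<and> real p \<le> x. (norm (a h p))\<^sup>2) - Re (\<kappa> h h) * x / ln x\<bar> \<le> \<epsilon> * x / ln x \<and>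
               norm (\<Sum>g\<in>{1..H+G} - {h}. \<Sum>p | prime p \<and> real p \<le> x. a h p * a g p) \<le> \<epsilon> * x / ln x)
            \<longrightarrow>
            (\<exists>B::nat \<Rightarrow> real. (\<forall>h\<in>{1..H+G}. B h > 0) \<and>
               (\<forall>\<^sub>F T in at_top. \<forall>h\<in>{1..H+G}.
                  (-1::real) ^ (if h \<le> H then 1 else 0) *
                  (\<Sum>p | prime p \<and> real p \<le> \<beta> * ln T.
                     Re (cnj (rcoef a H G C xe \<beta> T p) * a h p) /
                     ((1 + (norm (rcoef a H G C xe \<beta> T p))\<^sup>2) * real p powr \<sigma>))
                  \<le> (if \<sigma> < 1 then - B h * ln T powr (1 - \<sigma>) / ln (ln T)
                     else - B h * ln (ln (ln T))))))"
proof -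
  define I where "I = {1..H+G}"
  have fI: "finite I" by (simp add: I_def)
  have "\<forall>h\<in>I. \<exists>D. \<forall>p. prime p \<longrightarrow> norm (a h p) \<le> D"
  proof
    fix h assume "h \<in> I"
    then have "S_poly (a h)" "ramanujan (a h)" using Lh by (auto simp: I_def)
    then show "\<exists>D. \<forall>p. prime p \<longrightarrow> norm (a h p) \<le> D" by (rule bounded_ap)
  qed
  then obtain Df where Df: "\<forall>h\<in>I. \<forall>p. prime p \<longrightarrow> norm (a h p) \<le> Df h" by (rule bchoice[elim_format]) blast
  define D where "D = (\<Sum>h\<in>I. \<bar>Df h\<bar>)"
  have D0: "D \<ge> 0" by (simp add: D_def sum_nonneg)
  have Db: "\<forall>g\<in>{1..H+G}. \<forall>p. prime p \<longrightarrow> norm (a g p) \<le> D"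
  proof (intro ballI allI impI)
    fix g and p :: nat assume g: "g \<in> {1..H+G}" and p: "prime p"
    have "norm (a g p) \<le> Df g" using Df g p by (auto simp: I_def)
    also have "\<dots> \<le> \<bar>Df g\<bar>" by simp
    also have "\<dots> \<le> D" unfolding D_def by (rule member_le_sum) (use g fI in \<open>auto simp: I_def\<close>)
    finally show "norm (a g p) \<le> D" .
  qed
  define ktot where "ktot = (\<Sum>g\<in>I. Re (\<kappa> g g))"
  have kpos: "\<And>h. h \<in> I \<Longrightarrow> Re (\<kappa> h h) > 0" using kdiag by (auto simp: I_def)
  have ktot0: "ktot \<ge> 0" unfolding ktot_def using kpos by (intro sum_nonneg) (simp add: less_imp_le)
  define W where "W h = 2 * real (H+G)^2 * D^2 * ktot / Re (\<kappa> h h)" for h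
  have W0: "W h \<ge> 0" if "h \<in> I" for h using kpos[OF that] ktot0 by (simp add: W_def)
  define C0 where "C0 = 1 + (\<Sum>h\<in>I. W h)"
  have C01: "C0 \<ge> 1" unfolding C0_def using W0 by (simp add: sum_nonneg)
  have WC: "W h \<le> C0 - 1" if "h \<in> I" for h
    unfolding C0_def using member_le_sum[of h I W] W0 that fI by simp
  show ?thesis
  proof (rule exI[of _ 1], intro conjI allI impI)
    show "(0::real) < 1" by simp
    fix \<epsilon> :: real
    show "\<exists>C0. \<forall>C\<ge>C0. \<forall>xe::real.
            (\<forall>x\<ge>xe. \<forall>h\<in>{1..H+G}.
               \<bar>(\<Sum>p | prime p \<and> real p \<le> x. (norm (a h p))\<^sup>2) - Re (\<kappa> h h) * x / ln x\<bar> \<le> \<epsilon> * x / ln x \<and>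
               norm (\<Sum>g\<in>{1..H+G} - {h}. \<Sum>p | prime p \<and> real p \<le> x. a h p * a g p) \<le> \<epsilon> * x / ln x)
            \<longrightarrow>
            (\<exists>B::nat \<Rightarrow> real. (\<forall>h\<in>{1..H+G}. B h > 0) \<and>
               (\<forall>\<^sub>F T in at_top. \<forall>h\<in>{1..H+G}.
                  (-1::real) ^ (if h \<le> H then 1 else 0) *
                  (\<Sum>p | prime p \<and> real p \<le> \<beta> * ln T.
                     Re (cnj (rcoef a H G C xe \<beta> T p) * a h p) /
                     ((1 + (norm (rcoef a H G C xe \<beta> T p))\<^sup>2) * real p powr \<sigma>))
                  \<le> (if \<sigma> < 1 then - B h * ln T powr (1 - \<sigma>) / ln (ln T)
                     else - B h * ln (ln (ln T)))))"
    proof (rule exI[of _ C0], intro allI impI)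
      fix C xe :: real
      assume C: "C \<ge> C0"
      have Cpos: "C > 0" and C1: "C \<ge> 1" using C C01 by auto
      have keyC: "real (H+G)^2 * D^2 / C^2 * (\<Sum>g\<in>{1..H+G}. Re (\<kappa> g g)) \<le> Re (\<kappa> h h) / 2"
        if h: "h \<in> {1..H+G}" for h
      proof -
        have hI: "h \<in> I" using h by (simp add: I_def)
        have kh: "Re (\<kappa> h h) > 0" using kpos[OF hI] .
        have "C \<le> C^2" using C1 by (simp add: power2_eq_square)
        moreover have "W h \<le> C" using WC[OF hI] C by simp
        ultimately have "W h \<le> C^2" by simp
        then have "2 * real (H+G)^2 * D^2 * ktot \<le> C^2 * Re (\<kappa> h h)"
          using kh by (simp add: W_def divide_le_eq)
        then have "real (H+G)^2 * D^2 * ktot / C^2 \<le> Re (\<kappa> h h) / 2"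
          using Cpos by (simp add: divide_le_eq field_simps)
        then show ?thesis by (simp add: ktot_def I_def)
      qed
      have "\<forall>h\<in>{1..H+G}. \<exists>B>0. \<forall>\<^sub>F T in at_top. (-1::real) ^ (if h \<le> H then 1 else 0) *
                  (\<Sum>p | prime p \<and> real p \<le> \<beta> * ln T.
                     Re (cnj (rcoef a H G C xe \<beta> T p) * a h p) /
                     ((1 + (norm (rcoef a H G C xe \<beta> T p))\<^sup>2) * real p powr \<sigma>))
                  \<le> (if \<sigma> < 1 then - B * ln T powr (1 - \<sigma>) / ln (ln T)
                     else - B * ln (ln (ln T)))"
      proof
        fix h assume h: "h \<in> {1..H+G}"
        show "\<exists>B>0. \<forall>\<^sub>F T in at_top. (-1::real) ^ (if h \<le> H then 1 else 0) *
                  (\<Sum>p | prime p \<and> real p \<le> \<beta> * ln T.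
                     Re (cnj (rcoef a H G C xe \<beta> T p) * a h p) /
                     ((1 + (norm (rcoef a H G C xe \<beta> T p))\<^sup>2) * real p powr \<sigma>))
                  \<le> (if \<sigma> < 1 then - B * ln T powr (1 - \<sigma>) / ln (ln T)
                     else - B * ln (ln (ln T)))"
          by (rule per_h[OF lim koff h _ Db D0 Cpos keyC[OF h]])
             (use h kdiag assms(7) assms(9) assms(10) in auto)
      qed
      then obtain Bf where Bf: "\<forall>h\<in>{1..H+G}. Bf h > 0 \<and> (\<forall>\<^sub>F T in at_top. (-1::real) ^ (if h \<le> H then 1 else 0) *
                  (\<Sum>p | prime p \<and> real p \<le> \<beta> * ln T.
                     Re (cnj (rcoef a H G C xe \<beta> T p) * a h p) /
                     ((1 + (norm (rcoef a H G C xe \<beta> T p))\<^sup>2) * real p powr \<sigma>))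
                  \<le> (if \<sigma> < 1 then - Bf h * ln T powr (1 - \<sigma>) / ln (ln T)
                     else - Bf h * ln (ln (ln T))))"
        by (rule bchoice[elim_format]) blast
      show "\<exists>B::nat \<Rightarrow> real. (\<forall>h\<in>{1..H+G}. B h > 0) \<and>
               (\<forall>\<^sub>F T in at_top. \<forall>h\<in>{1..H+G}.
                  (-1::real) ^ (if h \<le> H then 1 else 0) *
                  (\<Sum>p | prime p \<and> real p \<le> \<beta> * ln T.
                     Re (cnj (rcoef a H G C xe \<beta> T p) * a h p) /
                     ((1 + (norm (rcoef a H G C xe \<beta> T p))\<^sup>2) * real p powr \<sigma>))
                  \<le> (if \<sigma> < 1 then - B h * ln T powr (1 - \<sigma>) / ln (ln T)
                     else - B h * ln (ln (ln T))))"
      proof (rule exI[of _ Bf], rule conjI)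
        show "\<forall>h\<in>{1..H+G}. Bf h > 0" using Bf by blast
        show "\<forall>\<^sub>F T in at_top. \<forall>h\<in>{1..H+G}.
                  (-1::real) ^ (if h \<le> H then 1 else 0) *
                  (\<Sum>p | prime p \<and> real p \<le> \<beta> * ln T.
                     Re (cnj (rcoef a H G C xe \<beta> T p) * a h p) /
                     ((1 + (norm (rcoef a H G C xe \<beta> T p))\<^sup>2) * real p powr \<sigma>))
                  \<le> (if \<sigma> < 1 then - Bf h * ln T powr (1 - \<sigma>) / ln (ln T)
                     else - Bf h * ln (ln (ln T)))"
          by (rule eventually_ball_finite) (use Bf in auto)
      qed
    qed
  qed
qed

end
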